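(* Fix $\varepsilon\in(0,1/2)$ and let $\tau_{\varepsilon K}=\inf\{t\ge0: G_t=\lfloor\varepsilon K\rfloor\}$ for the incremental construction. Then (a) $\displaystyle \frac{\tau_{\varepsilon K}}{K}\to\frac12\log\left(\frac{1}{1-2\varepsilon}\right)$ in probability as $K\to\infty$; (b) $\displaystyle \left(\frac{R_{\tau_{\varepsilon K}}}{K},\frac{C_{\tau_{\varepsilon K}}}{K}\right)\to\left(1-\sqrt{1-2\varepsilon},\,1-\sqrt{1-2\varepsilon}\right)$ in probability as $K\to\infty$.
   Context: Incremental construction. Fix an integer $K\ge2$, $[n]=\{1,\dots,n\}$. A random $K\times K$ matrix $\Psi$ is filled with the integers $1,\dots,K^2$, the integer $s$ being placed at step $s$. After step $t$, $R_t$ and $C_t$ denote the numbers of nonempty rows and columns (the nonempty rows are always $1,\dots,R_t$ and the nonempty columns $1,\dots,C_t$), $M_t$ is the submatrix with rows $[R_t]$ and columns $[C_t]$, and $G_t$ is the number of entries colored green; $R_0=C_0=G_0=0$. Step 1: $\Psi(1,1)=1$ and $(1,1)$ is colored green (so $R_1=C_1=G_1=1$). For $t=1,\dots,K^2-1$, given everything so far, step $t+1$ is: with conditional probability $\rho_{t+1}=\frac{(K-R_t)K}{K^2-t}$ a new row is created, i.e. $R_{t+1}=R_t+1$, and then, independently, with probability $\kappa_{t+1}=\frac{K-C_t}{K}$ also a new column is created: $C_{t+1}=C_t+1$, $\Psi(R_{t+1},C_{t+1})=t+1$ and this entry is colored green; otherwise $C_{t+1}=C_t$ and $\Psi(R_{t+1},Z)=t+1$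 with $Z$ uniform in $[C_t]$. With the complementary probability $1-\rho_{t+1}$, $R_{t+1}=R_t$ and a cell $(X,Y)$ is chosen uniformly among the empty cells of rows $[R_t]$ (columns in $[K]$); if $(X,Y)\notin M_t$ (i.e. $Y>C_t$) then $C_{t+1}=C_t+1$ and $\Psi(X,C_{t+1})=t+1$; otherwise $C_{t+1}=C_t$ and $\Psi(X,Y)=t+1$. *)

theory Defs
  imports "HOL-Probability.Probability"
begin

text \<open>State of the incremental construction after step t:
  (R_t, C_t, set of green cells, matrix Psi).  The matrix is a function on
  index pairs (row, column), with value 0 meaning "empty" (entries are 1..K^2).\<close>

type_synonym ic_state = "nat \<times> nat \<times> (nat \<times> nat) set \<times> (nat \<times> nat \<Rightarrow> nat)"

definition ic_R :: "ic_state \<Rightarrow> nat" where "ic_R s = fst s"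
definition ic_C :: "ic_state \<Rightarrow> nat" where "ic_C s = fst (snd s)"
definition ic_G :: "ic_state \<Rightarrow> nat" where "ic_G s = card (fst (snd (snd s)))"

definition ic_state0 :: ic_state where
  "ic_state0 = (0, 0, {}, (\<lambda>_. 0))"

definition ic_state1 :: ic_state where
  "ic_state1 = (1, 1, {(1,1)}, (\<lambda>_. 0)((1,1) := 1))"

text \<open>Step t+1, given the state after step t (t >= 1).\<close>
definition ic_step :: "nat \<Rightarrow> nat \<Rightarrow> ic_state \<Rightarrow> ic_state pmf" where
  "ic_step K t s = (case s of (R, C, Gr, Psi) \<Rightarrow>
     bind_pmf (bernoulli_pmf ((real K - real R) * real K / (real K ^ 2 - real t))) (\<lambda>newrow.
       if newrow then
         bind_pmf (bernoulli_pmf ((real K - real C) / real K)) (\<lambda>newcol.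
           if newcol then
             return_pmf (R + 1, C + 1, insert (R + 1, C + 1) Gr, Psi((R + 1, C + 1) := t + 1))
           else
             bind_pmf (pmf_of_set {1..C}) (\<lambda>Z.
               return_pmf (R + 1, C, Gr, Psi((R + 1, Z) := t + 1))))
       else
         bind_pmf (pmf_of_set {(x, y). x \<in> {1..R} \<and> y \<in> {1..K} \<and> Psi (x, y) = 0})
           (\<lambda>(X, Y).
              if Y > C then return_pmf (R, C + 1, Gr, Psi((X, C + 1) := t + 1))
              else return_pmf (R, C, Gr, Psi((X, Y) := t + 1)))))"

fun ic_traj :: "nat \<Rightarrow> nat \<Rightarrow> ic_state list pmf" where
  "ic_traj K 0 = return_pmf [ic_state0]"
| "ic_traj K (Suc 0) = return_pmf [ic_state0, ic_state1]"
| "ic_traj K (Suc (Suc n)) =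
     bind_pmf (ic_traj K (Suc n)) (\<lambda>xs. map_pmf (\<lambda>s. xs @ [s]) (ic_step K (Suc n) (last xs)))"

definition ic_full :: "nat \<Rightarrow> ic_state list pmf" where
  "ic_full K = ic_traj K (K ^ 2)"

text \<open>Hitting time inf{t >= 0 : G_t = m}; None encodes inf of the empty set (= infinity).\<close>
definition ic_tau :: "nat \<Rightarrow> ic_state list \<Rightarrow> nat option" where
  "ic_tau m xs = (if \<exists>t < length xs. ic_G (xs ! t) = m
                  then Some (LEAST t. t < length xs \<and> ic_G (xs ! t) = m) else None)"

end

theory Submission
  imports Defs "HOL-Real_Asymp.Real_Asymp"
begin

lemma pmf_bernoulli_gen: "pmf (bernoulli_pmf p) b = (if b then min 1 (max 0 p) else 1 - min 1 (max 0 p))"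
  by (simp add: bernoulli_pmf.rep_eq)

lemma bern_True: "True \<in> set_pmf (bernoulli_pmf p) \<Longrightarrow> 0 < p"
  by (auto simp: set_pmf_iff pmf_bernoulli_gen split: if_splits)

lemma bern_False: "False \<in> set_pmf (bernoulli_pmf p) \<Longrightarrow> p < 1"
  by (auto simp: set_pmf_iff pmf_bernoulli_gen split: if_splits)

definition invc :: "nat \<Rightarrow> nat \<Rightarrow> ic_state \<Rightarrow> bool" where
 "invc K n s = (case s of (R,C,Gr,Psi) \<Rightarrow> 1 \<le> R \<and> R \<le> K \<and> 1 \<le> C \<and> C \<le> K \<and>
     Gr \<subseteq> {1..R}\<times>{1..C} \<and> (\<forall>p. Psi p \<noteq> 0 \<longrightarrow> p \<in> {1..R}\<times>{1..C}) \<and> card {p. Psi p \<noteq> 0} = n)"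

definition Sset :: "nat \<Rightarrow> nat \<Rightarrow> (nat\<times>nat \<Rightarrow> nat) \<Rightarrow> (nat\<times>nat) set" where
  "Sset K R Psi = {(x, y). x \<in> {1..R} \<and> y \<in> {1..K} \<and> Psi (x, y) = 0}"

lemma NZ_sub: assumes "invc K n (R,C,Gr,Psi)" shows "{p. Psi p \<noteq> 0} \<subseteq> {1..R}\<times>{1..C}"
  using assms by (auto simp: invc_def)

lemma n_le_RC: assumes "invc K n (R,C,Gr,Psi)" shows "n \<le> R * C"
proof -
  have "n = card {p. Psi p \<noteq> 0}" using assms by (simp add: invc_def)
  also have "\<dots> \<le> card ({1..R}\<times>{1..C})" by (rule card_mono) (use NZ_sub[OF assms] in auto)
  finally show ?thesis by simp
qed

lemma Sset_eq: assumes "invc K n (R,C,Gr,Psi)"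
  shows "Sset K R Psi = {1..R}\<times>{1..K} - {p. Psi p \<noteq> 0}"
  by (auto simp: Sset_def)

lemma card_Sset: assumes "invc K n (R,C,Gr,Psi)"
  shows "card (Sset K R Psi) = R * K - n"
proof -
  have sub: "{p. Psi p \<noteq> 0} \<subseteq> {1..R}\<times>{1..K}" using NZ_sub[OF assms] assms
    by (force simp: invc_def)
  have "card (Sset K R Psi) = card ({1..R}\<times>{1..K}) - card {p. Psi p \<noteq> 0}"
  proof -
    have fin: "finite {p. Psi p \<noteq> 0}" by (rule finite_subset[OF sub]) simp
    show ?thesis unfolding Sset_eq[OF assms] by (rule card_Diff_subset[OF fin sub])
  qed
  then show ?thesis using assms by (simp add: invc_def)
qed

lemma card_Sset_gt: assumes "invc K n (R,C,Gr,Psi)"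
  shows "card (Sset K R Psi \<inter> {p. C < snd p}) = R * (K - C)"
proof -
  have "Sset K R Psi \<inter> {p. C < snd p} = {1..R}\<times>{C+1..K}"
    using NZ_sub[OF assms] by (auto simp: Sset_def)
  then show ?thesis by simp
qed

lemma finite_Sset: "finite (Sset K R Psi)"
  by (rule finite_subset[of _ "{1..R}\<times>{1..K}"]) (auto simp: Sset_def)

lemma NZ_upd: "{p. (Psi(q := Suc n)) p \<noteq> 0} = insert q {p. Psi p \<noteq> 0}"
  by auto

lemma inv_fin: assumes "invc K n (R,C,Gr,Psi)" shows "finite {p. Psi p \<noteq> 0}" "finite Gr"
  using NZ_sub[OF assms] assms by (auto simp: invc_def intro: finite_subset)

lemma rho_def_eq: "ic_step K n (R,C,Gr,Psi) =
   bind_pmf (bernoulli_pmf ((real K - real R) * real K / (real K ^ 2 - real n))) (\<lambda>newrow.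
       if newrow then
         bind_pmf (bernoulli_pmf ((real K - real C) / real K)) (\<lambda>newcol.
           if newcol then
             return_pmf (R + 1, C + 1, insert (R + 1, C + 1) Gr, Psi((R + 1, C + 1) := n + 1))
           else
             bind_pmf (pmf_of_set {1..C}) (\<lambda>Z.
               return_pmf (R + 1, C, Gr, Psi((R + 1, Z) := n + 1))))
       else
         bind_pmf (pmf_of_set (Sset K R Psi))
           (\<lambda>(X, Y).
              if Y > C then return_pmf (R, C + 1, Gr, Psi((X, C + 1) := n + 1))
              else return_pmf (R, C, Gr, Psi((X, Y) := n + 1))))"
  unfolding ic_step_def Sset_def by (simp only: prod.case)

lemma Sset_ne:
  assumes inv: "invc K n (R,C,Gr,Psi)" and nK: "n < K^2"
    and rho: "(real K - real R) * real K / (real K ^ 2 - real n) < 1"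
  shows "Sset K R Psi \<noteq> {}"
proof
  assume "Sset K R Psi = {}"
  then have "R * K - n = 0" using card_Sset[OF inv] by simp
  then have a: "R * K \<le> n" by simp
  have b: "n \<le> R * C" by (rule n_le_RC[OF inv])
  have c: "R * C \<le> R * K" using inv by (simp add: invc_def)
  from a b c have nRK: "n = R * K" by linarith
  have RK: "R \<le> K" using inv by (simp add: invc_def)
  show False
  proof (cases "R = K")
    case True then show False using nRK nK by (simp add: power2_eq_square)
  next
    case False
    then have "R < K" using RK by simp
    then have pos: "real K ^ 2 - real n > 0" using nK
      by (metis of_nat_less_iff of_nat_power diff_gt_0_iff_gt)
    have "real K ^ 2 - real n = (real K - real R) * real K" using nRK
      by (simp add: power2_eq_square algebra_simps)
    then show False using rho pos \<open>R < K\<close> by simp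
  qed
qed

lemma step_support:
  assumes inv: "invc K n (R,C,Gr,Psi)" and nK: "n < K^2"
    and s': "s' \<in> set_pmf (ic_step K n (R,C,Gr,Psi))"
  shows "invc K (Suc n) s' \<and> R \<le> ic_R s' \<and> ic_R s' \<le> R+1 \<and> C \<le> ic_C s' \<and> ic_C s' \<le> C+1
     \<and> card Gr \<le> ic_G s' \<and> ic_G s' \<le> card Gr + 1"
proof -
  have finNZ: "finite {p. Psi p \<noteq> 0}" and finG: "finite Gr" using inv_fin[OF inv] by auto
  have cardNZ: "card {p. Psi p \<noteq> 0} = n" and R1: "1 \<le> R" and RK: "R \<le> K" and C1: "1 \<le> C" and CK: "C \<le> K"
    and GrS: "Gr \<subseteq> {1..R}\<times>{1..C}" and NZS: "\<And>p. Psi p \<noteq> 0 \<Longrightarrow> p \<in> {1..R}\<times>{1..C}"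
    using inv by (auto simp: invc_def)
  have NZS': "1 \<le> a \<and> a \<le> R \<and> 1 \<le> b \<and> b \<le> C" if "0 < Psi (a,b)" for a b
    using NZS[of "(a,b)"] that by auto
  have cardins: "card {p. (Psi(q := Suc n)) p \<noteq> 0} = Suc n" if "Psi q = 0" for q
    unfolding NZ_upd using that finNZ cardNZ by simp
  from s' obtain nr where nr: "nr \<in> set_pmf (bernoulli_pmf ((real K - real R) * real K / (real K ^ 2 - real n)))"
    and s'': "s' \<in> set_pmf (if nr then
         bind_pmf (bernoulli_pmf ((real K - real C) / real K)) (\<lambda>newcol.
           if newcol then
             return_pmf (R + 1, C + 1, insert (R + 1, C + 1) Gr, Psi((R + 1, C + 1) := n + 1))
           else
             bind_pmf (pmf_of_set {1..C}) (\<lambda>Z.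
               return_pmf (R + 1, C, Gr, Psi((R + 1, Z) := n + 1))))
       else
         bind_pmf (pmf_of_set (Sset K R Psi))
           (\<lambda>(X, Y).
              if Y > C then return_pmf (R, C + 1, Gr, Psi((X, C + 1) := n + 1))
              else return_pmf (R, C, Gr, Psi((X, Y) := n + 1))))"
    unfolding rho_def_eq by auto
  show ?thesis
  proof (cases nr)
    case True
    then have "0 < (real K - real R) * real K / (real K ^ 2 - real n)" using nr bern_True by simp
    then have RltK: "R < K" using RK by (cases "R = K") auto
    from s'' True obtain nc where nc: "nc \<in> set_pmf (bernoulli_pmf ((real K - real C) / real K))"
      and s3: "s' \<in> set_pmf (if nc then
             return_pmf (R + 1, C + 1, insert (R + 1, C + 1) Gr, Psi((R + 1, C + 1) := n + 1))
           else
             bind_pmf (pmf_of_set {1..C}) (\<lambda>Z.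
               return_pmf (R + 1, C, Gr, Psi((R + 1, Z) := n + 1))))" by auto
    show ?thesis
    proof (cases nc)
      case True
      then have "0 < (real K - real C) / real K" using nc bern_True by simp
      then have CltK: "C < K" using CK by (cases "C = K") auto
      have z: "Psi (R+1, C+1) = 0" using NZS[of "(R+1,C+1)"] by auto
      have ng: "(R+1, C+1) \<notin> Gr" using GrS by auto
      have s'e: "s' = (R + 1, C + 1, insert (R + 1, C + 1) Gr, Psi((R + 1, C + 1) := n + 1))"
        using s3 True by simp
      show ?thesis unfolding s'e using RltK CltK R1 C1 GrS NZS cardins[OF z] ng finG
        by (auto simp: invc_def ic_R_def ic_C_def ic_G_def dest!: NZS')
    next
      case False
      from s3 False obtain Z where Z: "Z \<in> {1..C}" and s'e: "s' = (R + 1, C, Gr, Psi((R + 1, Z) := n + 1))"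
        using C1 by auto
      have z: "Psi (R+1, Z) = 0" using NZS[of "(R+1,Z)"] by auto
      show ?thesis unfolding s'e using RltK R1 C1 CK GrS NZS cardins[OF z] Z
        by (auto simp: invc_def ic_R_def ic_C_def ic_G_def dest!: NZS')
    qed
  next
    case False
    then have "(real K - real R) * real K / (real K ^ 2 - real n) < 1" using nr bern_False by simp
    then have ne: "Sset K R Psi \<noteq> {}" by (rule Sset_ne[OF inv nK])
    from s'' False obtain X Y where XY: "(X,Y) \<in> Sset K R Psi" and s3:
      "s' \<in> set_pmf (if Y > C then return_pmf (R, C + 1, Gr, Psi((X, C + 1) := n + 1))
              else return_pmf (R, C, Gr, Psi((X, Y) := n + 1)))"
      using ne finite_Sset by auto
    have XY': "X \<in> {1..R}" "Y \<in> {1..K}" "Psi (X,Y) = 0" using XY by (auto simp: Sset_def)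
    show ?thesis
    proof (cases "Y > C")
      case True
      have z: "Psi (X, C+1) = 0" using NZS[of "(X,C+1)"] by auto
      have s'e: "s' = (R, C + 1, Gr, Psi((X, C + 1) := n + 1))" using s3 True by simp
      show ?thesis unfolding s'e using True XY' R1 RK C1 GrS NZS cardins[OF z]
        by (auto simp: invc_def ic_R_def ic_C_def ic_G_def dest!: NZS')
    next
      case False
      have s'e: "s' = (R, C, Gr, Psi((X, Y) := n + 1))" using s3 False by simp
      show ?thesis unfolding s'e using False XY' R1 RK C1 CK GrS NZS cardins[OF XY'(3)]
        by (auto simp: invc_def ic_R_def ic_C_def ic_G_def dest!: NZS')
    qed
  qed
qed

lemma exp_bind:
  assumes "finite (set_pmf p)" "\<And>x. x \<in> set_pmf p \<Longrightarrow> finite (set_pmf (f x))"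
  shows "measure_pmf.expectation (bind_pmf p f) (h::_\<Rightarrow>real) =
         measure_pmf.expectation p (\<lambda>x. measure_pmf.expectation (f x) h)"
  using pmf_expectation_bind[OF assms(1) assms(2) subset_refl, where h=h]
  by (subst integral_measure_pmf[OF assms(1)]) auto

definition rho :: "nat \<Rightarrow> nat \<Rightarrow> nat \<Rightarrow> real" where
  "rho K n R = (real K - real R) * real K / (real K ^ 2 - real n)"
definition kap :: "nat \<Rightarrow> nat \<Rightarrow> real" where
  "kap K C = (real K - real C) / real K"
definition piv :: "nat \<Rightarrow> nat \<Rightarrow> nat \<Rightarrow> nat \<Rightarrow> real" where
  "piv K n R C = real R * (real K - real C) / (real R * real K - real n)"

definition brT :: "nat \<Rightarrow> nat \<Rightarrow> ic_state \<Rightarrow> ic_state pmf" where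
  "brT K n s = (case s of (R,C,Gr,Psi) \<Rightarrow>
         bind_pmf (bernoulli_pmf (kap K C)) (\<lambda>newcol.
           if newcol then
             return_pmf (R + 1, C + 1, insert (R + 1, C + 1) Gr, Psi((R + 1, C + 1) := n + 1))
           else
             bind_pmf (pmf_of_set {1..C}) (\<lambda>Z.
               return_pmf (R + 1, C, Gr, Psi((R + 1, Z) := n + 1)))))"

definition brF :: "nat \<Rightarrow> nat \<Rightarrow> ic_state \<Rightarrow> ic_state pmf" where
  "brF K n s = (case s of (R,C,Gr,Psi) \<Rightarrow>
         bind_pmf (pmf_of_set (Sset K R Psi))
           (\<lambda>(X, Y).
              if Y > C then return_pmf (R, C + 1, Gr, Psi((X, C + 1) := n + 1))
              else return_pmf (R, C, Gr, Psi((X, Y) := n + 1))))"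

lemma step_eq: "ic_step K n (R,C,Gr,Psi) =
   bind_pmf (bernoulli_pmf (rho K n R)) (\<lambda>nr. if nr then brT K n (R,C,Gr,Psi) else brF K n (R,C,Gr,Psi))"
  unfolding rho_def_eq rho_def brT_def brF_def kap_def by (simp only: prod.case)

lemma rho_bounds: assumes inv: "invc K n (R,C,Gr,Psi)" and nK: "n < K^2"
  shows "0 \<le> rho K n R" "rho K n R \<le> 1"
proof -
  have RK: "R \<le> K" using inv by (simp add: invc_def)
  have pos: "real K ^ 2 - real n > 0" using nK
    by (metis of_nat_less_iff of_nat_power diff_gt_0_iff_gt)
  have "n \<le> R * C" by (rule n_le_RC[OF inv])
  also have "R * C \<le> R * K" using inv by (simp add: invc_def)
  finally have nRK: "real n \<le> real R * real K" by (metis of_nat_le_iff of_nat_mult)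
  show "0 \<le> rho K n R" unfolding rho_def using RK pos by simp
  have "(real K - real R) * real K \<le> real K ^ 2 - real n" using nRK
    by (simp add: power2_eq_square algebra_simps)
  then show "rho K n R \<le> 1" unfolding rho_def using pos by simp
qed

lemma kap_bounds: assumes inv: "invc K n (R,C,Gr,Psi)"
  shows "0 \<le> kap K C" "kap K C \<le> 1"
  using inv by (auto simp: invc_def kap_def divide_simps)

lemma finite_bool_pmf: "finite (set_pmf (p :: bool pmf))"
  by (rule finite_subset[of _ UNIV]) auto

lemma brT_finite: assumes inv: "invc K n (R,C,Gr,Psi)"
  shows "finite (set_pmf (brT K n (R,C,Gr,Psi)))"
proof -
  have C1: "1 \<le> C" using inv by (simp add: invc_def)
  show ?thesis unfolding brT_def using C1 finite_bool_pmf by (auto simp: set_bind_pmf)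
qed

lemma brF_finite: assumes inv: "invc K n (R,C,Gr,Psi)" and nK: "n < K^2" and r: "rho K n R < 1"
  shows "finite (set_pmf (brF K n (R,C,Gr,Psi)))"
proof -
  have ne: "Sset K R Psi \<noteq> {}" using r by (intro Sset_ne[OF inv nK]) (simp add: rho_def)
  have "finite (\<Union>x\<in>Sset K R Psi. set_pmf (case x of (X, Y) \<Rightarrow>
              if Y > C then return_pmf (R, C + 1, Gr, Psi((X, C + 1) := n + 1))
              else return_pmf (R, C, Gr, Psi((X, Y) := n + 1))))"
    by (rule finite_UN_I[OF finite_Sset]) (auto split: prod.splits)
  then show ?thesis unfolding brF_def using ne finite_Sset by (simp add: set_bind_pmf)
qed

lemma step_finite: assumes inv: "invc K n (R,C,Gr,Psi)" and nK: "n < K^2"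
  shows "finite (set_pmf (ic_step K n (R,C,Gr,Psi)))"
  unfolding step_eq set_bind_pmf
proof (rule finite_UN_I[OF finite_bool_pmf])
  fix nr assume nr: "nr \<in> set_pmf (bernoulli_pmf (rho K n R))"
  show "finite (set_pmf (if nr then brT K n (R, C, Gr, Psi) else brF K n (R, C, Gr, Psi)))"
  proof (cases nr)
    case True then show ?thesis using brT_finite[OF inv] by simp
  next
    case False
    then have "rho K n R < 1" using nr bern_False by simp
    then show ?thesis using brF_finite[OF inv nK] False by simp
  qed
qed

lemma brT_exp: assumes inv: "invc K n (R,C,Gr,Psi)"
  shows "measure_pmf.expectation (brT K n (R,C,Gr,Psi)) (\<lambda>s. h (ic_R s) (ic_C s) (ic_G s)) =
     kap K C * h (R+1) (C+1) (card Gr + 1) + (1 - kap K C) * h (R+1) C (card Gr)"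
proof -
  have C1: "1 \<le> C" using inv by (simp add: invc_def)
  have ng: "(R+1, C+1) \<notin> Gr" and finG: "finite Gr" using inv inv_fin[OF inv] by (auto simp: invc_def)
  have "measure_pmf.expectation (brT K n (R,C,Gr,Psi)) (\<lambda>s. h (ic_R s) (ic_C s) (ic_G s)) =
     measure_pmf.expectation (bernoulli_pmf (kap K C)) (\<lambda>nc. measure_pmf.expectation (if nc then
             return_pmf (R + 1, C + 1, insert (R + 1, C + 1) Gr, Psi((R + 1, C + 1) := n + 1))
           else
             bind_pmf (pmf_of_set {1..C}) (\<lambda>Z.
               return_pmf (R + 1, C, Gr, Psi((R + 1, Z) := n + 1)))) (\<lambda>s. h (ic_R s) (ic_C s) (ic_G s)))"
    unfolding brT_def prod.case
    by (rule exp_bind[OF finite_bool_pmf]) (use C1 in \<open>auto simp: set_bind_pmf\<close>)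
  also have "\<dots> = kap K C * h (R+1) (C+1) (card Gr + 1) + (1 - kap K C) * h (R+1) C (card Gr)"
  proof -
    have e2: "measure_pmf.expectation (bind_pmf (pmf_of_set {1..C}) (\<lambda>Z.
               return_pmf (R + 1, C, Gr, Psi((R + 1, Z) := n + 1)))) (\<lambda>s. h (ic_R s) (ic_C s) (ic_G s))
          = h (R+1) C (card Gr)"
      by (subst exp_bind) (use C1 in \<open>auto simp: ic_R_def ic_C_def ic_G_def\<close>)
    have "measure_pmf.expectation (bernoulli_pmf (kap K C)) (\<lambda>nc. measure_pmf.expectation (if nc then
             return_pmf (R + 1, C + 1, insert (R + 1, C + 1) Gr, Psi((R + 1, C + 1) := n + 1))
           else
             bind_pmf (pmf_of_set {1..C}) (\<lambda>Z.
               return_pmf (R + 1, C, Gr, Psi((R + 1, Z) := n + 1)))) (\<lambda>s. h (ic_R s) (ic_C s) (ic_G s)))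
       = measure_pmf.expectation (return_pmf (R + 1, C + 1, insert (R + 1, C + 1) Gr, Psi((R + 1, C + 1) := n + 1))) (\<lambda>s. h (ic_R s) (ic_C s) (ic_G s)) * kap K C
         + h (R+1) C (card Gr) * (1 - kap K C)"
      by (subst integral_bernoulli_pmf[OF kap_bounds[OF inv]]) (simp only: if_True if_False e2)
    then show ?thesis using ng finG
      by (simp add: ic_R_def ic_C_def ic_G_def algebra_simps)
  qed
  finally show ?thesis .
qed

lemma brF_exp: assumes inv: "invc K n (R,C,Gr,Psi)" and nK: "n < K^2" and r: "rho K n R < 1"
  shows "measure_pmf.expectation (brF K n (R,C,Gr,Psi)) (\<lambda>s. h (ic_R s) (ic_C s) (ic_G s)) =
     piv K n R C * h R (C+1) (card Gr) + (1 - piv K n R C) * h R C (card Gr)"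
proof -
  define S where "S = Sset K R Psi"
  have ne: "S \<noteq> {}" unfolding S_def using r by (intro Sset_ne[OF inv nK]) (simp add: rho_def)
  have fS: "finite S" unfolding S_def by (rule finite_Sset)
  define h1 where "h1 = h R (C+1) (card Gr)"
  define h0 where "h0 = h R C (card Gr)"
  have "measure_pmf.expectation (brF K n (R,C,Gr,Psi)) (\<lambda>s. h (ic_R s) (ic_C s) (ic_G s)) =
     measure_pmf.expectation (pmf_of_set S) (\<lambda>xy. measure_pmf.expectation (case xy of (X, Y) \<Rightarrow>
              if Y > C then return_pmf (R, C + 1, Gr, Psi((X, C + 1) := n + 1))
              else return_pmf (R, C, Gr, Psi((X, Y) := n + 1))) (\<lambda>s. h (ic_R s) (ic_C s) (ic_G s)))"
    unfolding brF_def prod.case S_def[symmetric]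
    by (rule exp_bind) (use ne fS in \<open>auto split: prod.splits\<close>)
  also have "\<dots> = measure_pmf.expectation (pmf_of_set S) (\<lambda>xy. if C < snd xy then h1 else h0)"
    by (rule Bochner_Integration.integral_cong) (auto simp: h1_def h0_def ic_R_def ic_C_def ic_G_def split: prod.splits)
  also have "\<dots> = (\<Sum>xy\<in>S. if C < snd xy then h1 else h0) / card S"
    by (rule integral_pmf_of_set[OF ne fS])
  also have "\<dots> = (card (S \<inter> {xy. C < snd xy}) * h1 + card (S - {xy. C < snd xy}) * h0) / card S"
    using fS by (simp add: sum.If_cases Diff_eq)
  also have "\<dots> = piv K n R C * h1 + (1 - piv K n R C) * h0"
  proof -
    have c1: "card (S \<inter> {xy. C < snd xy}) = R * (K - C)" unfolding S_def by (rule card_Sset_gt[OF inv])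
    have c2: "card (S - {xy. C < snd xy}) = card S - card (S \<inter> {xy. C < snd xy})"
      using fS by (simp add: card_Diff_subset_Int)
    have cS: "card S = R * K - n" unfolding S_def by (rule card_Sset[OF inv])
    have "n \<le> R * C" by (rule n_le_RC[OF inv])
    also have "R * C \<le> R * K" using inv by (simp add: invc_def)
    finally have nRK: "n \<le> R * K" .
    have CK: "C \<le> K" using inv by (simp add: invc_def)
    have cSpos: "card S > 0" using ne fS by (simp add: card_gt_0_iff)
    have le: "R * (K - C) \<le> R * K - n" using c1 cS card_mono[OF fS, of "S \<inter> {xy. C < snd xy}"] by auto
    have r1: "real (card S) = real R * real K - real n" using cS nRK by (simp add: of_nat_diff)
    have r2: "real (card (S \<inter> {xy. C < snd xy})) = real R * (real K - real C)" using c1 CK by (simp add: of_nat_diff)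
    have le': "card (S \<inter> {xy. C < snd xy}) \<le> card S" by (rule card_mono[OF fS]) auto
    have r3': "real (card (S - {xy. C < snd xy})) = real (card S) - real (card (S \<inter> {xy. C < snd xy}))"
      by (simp only: c2 of_nat_diff[OF le'])
    have r3: "real (card (S - {xy. C < snd xy})) = real (card S) - real R * (real K - real C)"
      using r3' r2 by simp
    have "real (card S) \<noteq> 0" using cSpos by simp
    then show ?thesis unfolding piv_def r3 r2 r1[symmetric] by (simp add: field_simps)
  qed
  finally show ?thesis by (simp add: h1_def h0_def)
qed

lemma step_exp:
  assumes inv: "invc K n (R,C,Gr,Psi)" and nK: "n < K^2"
  shows "measure_pmf.expectation (ic_step K n (R,C,Gr,Psi)) (\<lambda>s. h (ic_R s) (ic_C s) (ic_G s)) =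
   rho K n R * kap K C * h (R+1) (C+1) (card Gr + 1) + rho K n R * (1 - kap K C) * h (R+1) C (card Gr)
   + (1 - rho K n R) * piv K n R C * h R (C+1) (card Gr) + (1 - rho K n R) * (1 - piv K n R C) * h R C (card Gr)"
proof -
  let ?H = "\<lambda>s. h (ic_R s) (ic_C s) (ic_G s)"
  have "measure_pmf.expectation (ic_step K n (R,C,Gr,Psi)) ?H =
    measure_pmf.expectation (bernoulli_pmf (rho K n R)) (\<lambda>nr. measure_pmf.expectation
      (if nr then brT K n (R,C,Gr,Psi) else brF K n (R,C,Gr,Psi)) ?H)"
    unfolding step_eq
  proof (rule exp_bind[OF finite_bool_pmf])
    fix nr assume nr: "nr \<in> set_pmf (bernoulli_pmf (rho K n R))"
    show "finite (set_pmf (if nr then brT K n (R, C, Gr, Psi) else brF K n (R, C, Gr, Psi)))"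
    proof (cases nr)
      case True then show ?thesis using brT_finite[OF inv] by simp
    next
      case False
      then have "rho K n R < 1" using nr bern_False by simp
      then show ?thesis using brF_finite[OF inv nK] False by simp
    qed
  qed
  also have "\<dots> = rho K n R * measure_pmf.expectation (brT K n (R,C,Gr,Psi)) ?H
       + (1 - rho K n R) * measure_pmf.expectation (brF K n (R,C,Gr,Psi)) ?H"
    using rho_bounds[OF inv nK] by simp
  also have "\<dots> = rho K n R * (kap K C * h (R+1) (C+1) (card Gr + 1) + (1 - kap K C) * h (R+1) C (card Gr))
       + (1 - rho K n R) * (piv K n R C * h R (C+1) (card Gr) + (1 - piv K n R C) * h R C (card Gr))"
  proof (cases "rho K n R < 1")
    case True
    show ?thesis by (simp only: brT_exp[OF inv] brF_exp[OF inv nK True])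
  next
    case False
    then have "rho K n R = 1" using rho_bounds[OF inv nK] by simp
    then show ?thesis by (simp add: brT_exp[OF inv])
  qed
  finally show ?thesis by (simp add: algebra_simps)
qed

definition good :: "nat \<Rightarrow> nat \<Rightarrow> ic_state list \<Rightarrow> bool" where
  "good K n xs = (length xs = Suc n \<and> xs ! 0 = ic_state0 \<and> (\<forall>u. 1 \<le> u \<and> u \<le> n \<longrightarrow> invc K u (xs ! u)) \<and>
     (\<forall>u<n. ic_R (xs!u) \<le> ic_R (xs!Suc u) \<and> ic_C (xs!u) \<le> ic_C (xs!Suc u) \<and>
            ic_G (xs!u) \<le> ic_G (xs!Suc u) \<and> ic_G (xs!Suc u) \<le> ic_G (xs!u) + 1))"

lemma inv_state1: "1 \<le> K \<Longrightarrow> invc K 1 ic_state1"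
proof -
  have "{p. ((\<lambda>_. 0)((1::nat, 1::nat) := 1::nat)) p \<noteq> 0} = {(1,1)}" by auto
  then show "1 \<le> K \<Longrightarrow> invc K 1 ic_state1" by (simp add: invc_def ic_state1_def)
qed

lemma exp_cong_supp:
  assumes "\<And>x. x \<in> set_pmf M \<Longrightarrow> f x = g x"
  shows "measure_pmf.expectation M f = measure_pmf.expectation M (g :: _ \<Rightarrow> real)"
  using assms by (intro integral_cong_AE) (auto simp: AE_measure_pmf_iff)

lemma traj_facts:
  assumes "n \<le> K^2" "1 \<le> K"
  shows "(\<forall>xs\<in>set_pmf (ic_traj K n). good K n xs) \<and> finite (set_pmf (ic_traj K n))"
  using assms
proof (induction K n rule: ic_traj.induct)
  case (1 K)
  then show ?case by (simp add: good_def)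
next
  case (2 K)
  have i1: "invc K 1 ic_state1" using inv_state1 2 by simp
  have u1: "\<And>u. 1 \<le> u \<and> u \<le> 1 \<Longrightarrow> u = (1::nat)" by auto
  have "good K 1 [ic_state0, ic_state1]" unfolding good_def
    using i1 u1 by (auto simp: ic_state0_def ic_state1_def ic_R_def ic_C_def ic_G_def)
  then show ?case by simp
next
  case (3 K n)
  then have IH: "\<forall>xs\<in>set_pmf (ic_traj K (Suc n)). good K (Suc n) xs" "finite (set_pmf (ic_traj K (Suc n)))"
    by auto
  have nK: "Suc n < K^2" using 3(2) by simp
  have A: "good K (Suc (Suc n)) (ys @ [s]) \<and> finite (set_pmf (ic_step K (Suc n) (last ys)))"
    if ys: "ys \<in> set_pmf (ic_traj K (Suc n))" and s: "s \<in> set_pmf (ic_step K (Suc n) (last ys))" for ys s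
  proof -
    have g: "good K (Suc n) ys" using IH ys by auto
    have len: "length ys = Suc (Suc n)" using g by (simp add: good_def)
    have "ys \<noteq> []" using len by auto
    then have last: "last ys = ys ! Suc n" using len by (simp add: last_conv_nth)
    have iv: "invc K (Suc n) (ys ! Suc n)" using g by (simp add: good_def)
    obtain R C Gr Psi where e: "ys ! Suc n = (R,C,Gr,Psi)" by (metis prod_cases4)
    have ss: "invc K (Suc (Suc n)) s \<and> R \<le> ic_R s \<and> ic_R s \<le> R+1 \<and> C \<le> ic_C s \<and> ic_C s \<le> C+1
     \<and> card Gr \<le> ic_G s \<and> ic_G s \<le> card Gr + 1"
      using step_support[OF iv[unfolded e] nK] s by (simp add: last e)
    have fin: "finite (set_pmf (ic_step K (Suc n) (last ys)))" using step_finite[OF iv[unfolded e] nK] by (simp add: last e)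
    have p1: "length (ys @ [s]) = Suc (Suc (Suc n))" using len by simp
    have p2: "(ys @ [s]) ! 0 = ic_state0" using g len by (simp add: good_def nth_append)
    have p3: "\<forall>u. 1 \<le> u \<and> u \<le> Suc (Suc n) \<longrightarrow> invc K u ((ys @ [s]) ! u)"
        using g len ss by (auto simp: good_def nth_append le_Suc_eq)
    have p4: "\<forall>u < Suc (Suc n). ic_R ((ys @ [s]) ! u) \<le> ic_R ((ys @ [s]) ! Suc u) \<and> ic_C ((ys @ [s]) ! u) \<le> ic_C ((ys @ [s]) ! Suc u) \<and>
            ic_G ((ys @ [s]) ! u) \<le> ic_G ((ys @ [s]) ! Suc u) \<and> ic_G ((ys @ [s]) ! Suc u) \<le> ic_G ((ys @ [s]) ! u) + 1"
    proof (intro allI impI)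
      fix u assume u: "u < Suc (Suc n)"
      show "ic_R ((ys @ [s]) ! u) \<le> ic_R ((ys @ [s]) ! Suc u) \<and> ic_C ((ys @ [s]) ! u) \<le> ic_C ((ys @ [s]) ! Suc u) \<and>
            ic_G ((ys @ [s]) ! u) \<le> ic_G ((ys @ [s]) ! Suc u) \<and> ic_G ((ys @ [s]) ! Suc u) \<le> ic_G ((ys @ [s]) ! u) + 1"
      proof (cases "u = Suc n")
        case True
        then show ?thesis using len ss e by (simp add: nth_append ic_R_def ic_C_def ic_G_def)
      next
        case False
        then have "u < Suc n" using u by simp
        then show ?thesis using g len by (simp add: good_def nth_append)
      qed
    qed
    have gg: "good K (Suc (Suc n)) (ys @ [s])" unfolding good_def using p1 p2 p3 p4 by blast
    show ?thesis using gg fin by simp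
  qed
  show ?case
  proof
    show "\<forall>xs\<in>set_pmf (ic_traj K (Suc (Suc n))). good K (Suc (Suc n)) xs"
      using A by auto
    show "finite (set_pmf (ic_traj K (Suc (Suc n))))"
    proof -
      have "finite (set_pmf (ic_step K (Suc n) (last ys)))" if ys: "ys \<in> set_pmf (ic_traj K (Suc n))" for ys
      proof -
        obtain s where "s \<in> set_pmf (ic_step K (Suc n) (last ys))" using set_pmf_not_empty by fast
        then show ?thesis using A[OF ys] by blast
      qed
      then show ?thesis using IH by (auto simp: set_bind_pmf intro!: finite_UN_I)
    qed
  qed
qed

lemma traj_good: "n \<le> K^2 \<Longrightarrow> 1 \<le> K \<Longrightarrow> xs \<in> set_pmf (ic_traj K n) \<Longrightarrow> good K n xs"
  using traj_facts by blast

lemma traj_finite: "n \<le> K^2 \<Longrightarrow> 1 \<le> K \<Longrightarrow> finite (set_pmf (ic_traj K n))"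
  using traj_facts by blast

lemma traj_exp:
  assumes n1: "1 \<le> n" and nK: "n < K^2"
  shows "measure_pmf.expectation (ic_traj K (Suc n)) (F :: ic_state list \<Rightarrow> real) =
    measure_pmf.expectation (ic_traj K n) (\<lambda>xs. measure_pmf.expectation (ic_step K n (xs ! n)) (\<lambda>s. F (xs @ [s])))"
proof -
  have K1: "1 \<le> K" using nK by (cases K) auto
  obtain m where m: "n = Suc m" using n1 by (cases n) auto
  have fin: "finite (set_pmf (ic_step K n (xs ! n)))" if xs: "xs \<in> set_pmf (ic_traj K n)" for xs
  proof -
    have g: "good K n xs" using traj_good[OF _ K1 xs] nK by simp
    have iv: "invc K n (xs ! n)" using g n1 by (simp add: good_def)
    obtain R C Gr Psi where e: "xs ! n = (R,C,Gr,Psi)" by (metis prod_cases4)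
    show ?thesis using step_finite[OF iv[unfolded e] nK] e by simp
  qed
  have "measure_pmf.expectation (ic_traj K (Suc n)) F =
    measure_pmf.expectation (ic_traj K n) (\<lambda>xs. measure_pmf.expectation (map_pmf (\<lambda>s. xs @ [s]) (ic_step K n (last xs))) F)"
    unfolding m ic_traj.simps(3)
  proof (rule exp_bind)
    show "finite (set_pmf (ic_traj K (Suc m)))" using traj_finite[OF _ K1] nK m by simp
    fix xs assume xs: "xs \<in> set_pmf (ic_traj K (Suc m))"
    have g: "good K n xs" using traj_good[OF _ K1] xs nK m by simp
    then have len: "length xs = Suc n" by (simp add: good_def)
    then have "xs \<noteq> []" by auto
    then have "last xs = xs ! n" using len by (simp add: last_conv_nth)
    then show "finite (set_pmf (map_pmf (\<lambda>s. xs @ [s]) (ic_step K (Suc m) (last xs))))"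
      using fin[of xs] xs m by simp
  qed
  also have "\<dots> = measure_pmf.expectation (ic_traj K n) (\<lambda>xs. measure_pmf.expectation (ic_step K n (xs ! n)) (\<lambda>s. F (xs @ [s])))"
  proof (rule exp_cong_supp)
    fix xs assume xs: "xs \<in> set_pmf (ic_traj K n)"
    have g: "good K n xs" using traj_good[OF _ K1] xs nK by simp
    then have len: "length xs = Suc n" by (simp add: good_def)
    then have "xs \<noteq> []" by auto
    then have "last xs = xs ! n" using len by (simp add: last_conv_nth)
    then show "measure_pmf.expectation (map_pmf (\<lambda>s. xs @ [s]) (ic_step K n (last xs))) F =
         measure_pmf.expectation (ic_step K n (xs ! n)) (\<lambda>s. F (xs @ [s]))" by simp
  qed
  finally show ?thesis .
qed

lemma traj_prefix:
  assumes "n \<le> m" "m \<le> K^2" "1 \<le> K"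
  shows "map_pmf (take (Suc n)) (ic_traj K m) = ic_traj K n"
  using assms
proof (induction m)
  case 0
  then show ?case by simp
next
  case (Suc m)
  show ?case
  proof (cases "n = Suc m")
    case True
    have "map_pmf (take (Suc n)) (ic_traj K (Suc m)) = map_pmf id (ic_traj K (Suc m))"
    proof (rule map_pmf_cong[OF refl])
      fix xs assume "xs \<in> set_pmf (ic_traj K (Suc m))"
      then have "good K (Suc m) xs" using traj_good Suc by blast
      then show "take (Suc n) xs = id xs" using True by (simp add: good_def)
    qed
    then show ?thesis using True by simp
  next
    case False
    then have nm: "n \<le> m" using Suc by simp
    show ?thesis
    proof (cases m)
      case 0
      then show ?thesis using nm by simp
    next
      case (Suc m')
      have "map_pmf (take (Suc n)) (ic_traj K (Suc m)) = bind_pmf (ic_traj K m) (\<lambda>xs. return_pmf (take (Suc n) xs))"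
        unfolding Suc ic_traj.simps(3) map_bind_pmf
      proof (rule bind_pmf_cong[OF refl])
        fix xs assume "xs \<in> set_pmf (ic_traj K (Suc m'))"
        then have "good K m xs" using traj_good \<open>Suc m \<le> K^2\<close> \<open>1 \<le> K\<close> Suc by auto
        then have "length xs = Suc m" by (simp add: good_def)
        then have "\<And>s. take (Suc n) (xs @ [s]) = take (Suc n) xs" using nm by simp
        then show "map_pmf (take (Suc n)) (map_pmf (\<lambda>s. xs @ [s]) (ic_step K (Suc m') (last xs))) =
          return_pmf (take (Suc n) xs)" by (simp add: pmf.map_comp o_def)
      qed
      also have "\<dots> = map_pmf (take (Suc n)) (ic_traj K m)" by (simp add: map_pmf_def)
      also have "\<dots> = ic_traj K n" using Suc.IH nm Suc.prems by simp
      finally show ?thesis .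
    qed
  qed
qed

lemma exp_mono_fin:
  assumes "finite (set_pmf M)" "\<And>x. x \<in> set_pmf M \<Longrightarrow> f x \<le> g x"
  shows "measure_pmf.expectation M f \<le> measure_pmf.expectation M (g :: _ \<Rightarrow> real)"
  using assms by (intro integral_mono_AE integrable_measure_pmf_finite) (auto simp: AE_measure_pmf_iff)

lemma exp_add_const:
  assumes "finite (set_pmf M)"
  shows "measure_pmf.expectation M (\<lambda>x. f x + c) = measure_pmf.expectation M f + (c::real)"
  using assms by (subst Bochner_Integration.integral_add) (auto intro: integrable_measure_pmf_finite)

lemma moment_induct:
  fixes Z :: "nat \<Rightarrow> ic_state list \<Rightarrow> real"
  assumes b0: "measure_pmf.expectation (ic_traj K 1) (\<lambda>xs. (Z 1 xs)^2) \<le> 1"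
    and step: "\<And>n xs. 1 \<le> n \<Longrightarrow> n < N \<Longrightarrow> xs \<in> set_pmf (ic_traj K n) \<Longrightarrow>
        measure_pmf.expectation (ic_step K n (xs!n)) (\<lambda>s. (Z (Suc n) (xs@[s]))^2) \<le> (Z n xs)^2 + 1"
    and NK: "N \<le> K^2" and K1: "1 \<le> K"
  shows "1 \<le> n \<Longrightarrow> n \<le> N \<Longrightarrow> measure_pmf.expectation (ic_traj K n) (\<lambda>xs. (Z n xs)^2) \<le> real n"
proof (induction n rule: nat_induct_at_least)
  case base
  then show ?case using b0 by simp
next
  case (Suc n)
  have nK: "n < K^2" using Suc NK by simp
  have fin: "finite (set_pmf (ic_traj K n))" using traj_finite[OF _ K1] nK by simp
  have "measure_pmf.expectation (ic_traj K (Suc n)) (\<lambda>xs. (Z (Suc n) xs)^2) =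
    measure_pmf.expectation (ic_traj K n) (\<lambda>xs. measure_pmf.expectation (ic_step K n (xs ! n)) (\<lambda>s. (Z (Suc n) (xs @ [s]))^2))"
    by (rule traj_exp[OF Suc(1) nK])
  also have "\<dots> \<le> measure_pmf.expectation (ic_traj K n) (\<lambda>xs. (Z n xs)^2 + 1)"
    by (rule exp_mono_fin[OF fin]) (rule step, use Suc in auto)
  also have "\<dots> = measure_pmf.expectation (ic_traj K n) (\<lambda>xs. (Z n xs)^2) + 1"
    by (rule exp_add_const[OF fin])
  also have "\<dots> \<le> real n + 1" using Suc by simp
  finally show ?case by simp
qed

lemma alg_step:
  fixes p b x mu :: real
  assumes "p = x * b" "0 \<le> p" "p \<le> 1" "0 \<le> b" "b \<le> 1"
  shows "p * (x - 1 - (1-b)*mu)^2 + (1-p) * (x - (1-b)*mu)^2 \<le> (x - mu)^2 + 1"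
proof -
  have eq: "p * (x - 1 - (1-b)*mu)^2 + (1-p) * (x - (1-b)*mu)^2 = (1-b)^2 * (x-mu)^2 + p * (1 - p)"
    using assms(1) by (simp add: power2_eq_square algebra_simps)
  have "(1-b)^2 * (x-mu)^2 \<le> 1 * (x-mu)^2"
    by (rule mult_right_mono) (use assms in \<open>auto simp: power_le_one abs_le_iff power2_eq_square mult_le_one\<close>)
  moreover have "p * (1 - p) \<le> 1" using assms by (intro mult_le_one) auto
  ultimately show ?thesis unfolding eq by simp
qed

definition bb :: "nat \<Rightarrow> nat \<Rightarrow> real" where "bb K u = real K / (real K ^ 2 - real u)"
definition lam :: "nat \<Rightarrow> nat \<Rightarrow> real" where "lam K n = (\<Prod>j < n - 1. (1 - bb K (Suc j)))"
definition mu :: "nat \<Rightarrow> nat \<Rightarrow> real" where "mu K n = (real K - 1) * lam K n"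
definition qq :: "nat \<Rightarrow> nat \<Rightarrow> ic_state \<Rightarrow> real" where
  "qq K u s = (real K - real (ic_R s)) * (real K - real (ic_C s)) / (real K ^ 2 - real u)"
definition AA :: "nat \<Rightarrow> nat \<Rightarrow> ic_state list \<Rightarrow> real" where
  "AA K n xs = 1 + (\<Sum>j < n - 1. qq K (Suc j) (xs ! Suc j))"

lemma mu_Suc: "1 \<le> n \<Longrightarrow> mu K (Suc n) = (1 - bb K n) * mu K n"
  by (cases n) (auto simp: mu_def lam_def)

lemma AA_Suc: assumes "1 \<le> n" "length xs = Suc n"
  shows "AA K (Suc n) (xs @ [s]) = AA K n xs + qq K n (xs ! n)"
proof -
  obtain m where m: "n = Suc m" using assms by (cases n) auto
  have "(\<Sum>j < m. qq K (Suc j) ((xs @ [s]) ! Suc j)) = (\<Sum>j < m. qq K (Suc j) (xs ! Suc j))"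
    using assms m by (intro sum.cong) (auto simp: nth_append)
  then show ?thesis using assms m by (simp add: AA_def nth_append)
qed

lemma rho_eq: "rho K n R = (real K - real R) * bb K n"
  by (simp add: rho_def bb_def)

lemma bb_bounds: assumes "n + K \<le> K^2" "1 \<le> K" shows "0 \<le> bb K n" "bb K n \<le> 1"
proof -
  have "real n + real K \<le> real K ^ 2" using assms(1) by (metis of_nat_add of_nat_le_iff of_nat_power)
  then have a: "real K \<le> real K ^ 2 - real n" by simp
  have "0 < real K" using assms by simp
  then have p: "real K ^ 2 - real n > 0" using a by linarith
  show "0 \<le> bb K n" using p by (simp add: bb_def)
  show "bb K n \<le> 1" using p a by (simp add: bb_def pos_divide_le_eq[OF p])
qed

lemma pC_eq:
  assumes inv: "invc K n (R,C,Gr,Psi)" and nK: "n < K^2"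
  shows "rho K n R * kap K C + (1 - rho K n R) * piv K n R C = (real K - real C) * bb K n"
proof -
  have K0: "real K > 0" using inv by (auto simp: invc_def)
  have pos: "real K ^ 2 - real n > 0" using nK
    by (metis of_nat_less_iff of_nat_power diff_gt_0_iff_gt)
  have nRC: "n \<le> R * C" by (rule n_le_RC[OF inv])
  have CK: "C \<le> K" and R1: "1 \<le> R" using inv by (auto simp: invc_def)
  have one: "1 - rho K n R = (real R * real K - real n) / (real K ^ 2 - real n)"
    using pos by (simp add: rho_def field_simps power2_eq_square)
  show ?thesis
  proof (cases "R * K = n")
    case True
    then have "R * K \<le> R * C" using nRC by simp
    then have "C = K" using CK R1 by simp
    then show ?thesis using True one by (simp add: kap_def piv_def)
  next
    case False
    then have ne: "real R * real K - real n \<noteq> 0" by (metis of_nat_eq_iff of_nat_mult eq_iff_diff_eq_0)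
    define D where "D = real K ^ 2 - real n"
    define E where "E = real R * real K - real n"
    have a: "rho K n R * kap K C = (real K - real R) * (real K - real C) / D"
      using K0 by (simp add: rho_def kap_def D_def)
    have b: "(E / D) * piv K n R C = real R * (real K - real C) / D"
      using ne unfolding piv_def E_def[symmetric] by (simp add: E_def)
    have c: "(real K - real R) * (real K - real C) / D + real R * (real K - real C) / D
       = (real K - real C) * (real K / D)"
      by (simp add: add_divide_distrib[symmetric] algebra_simps)
    show ?thesis unfolding one E_def[symmetric] D_def[symmetric] a b c
      by (simp add: bb_def D_def)
  qed
qed

lemma traj1: "ic_traj K 1 = return_pmf [ic_state0, ic_state1]"
  by (simp add: One_nat_def)

lemma alg_step0:
  fixes p z :: real
  assumes "0 \<le> p" "p \<le> 1"
  shows "p * (z + 1 - p)^2 + (1-p) * (z - p)^2 \<le> z^2 + 1"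
proof -
  have eq: "p * (z + 1 - p)^2 + (1-p) * (z - p)^2 = z^2 + p * (1 - p)"
    by (simp add: power2_eq_square algebra_simps)
  have "p * (1 - p) \<le> 1" using assms by (intro mult_le_one) auto
  then show ?thesis unfolding eq by simp
qed

lemma step_ctx:
  assumes K1: "1 \<le> K" and n1: "1 \<le> n" and nN: "n + K \<le> K^2" and xs: "xs \<in> set_pmf (ic_traj K n)"
  shows "length xs = Suc n \<and> invc K n (xs ! n) \<and> n < K^2 \<and> 0 \<le> bb K n \<and> bb K n \<le> 1"
proof -
  have nK: "n < K^2" using nN K1 by simp
  have g: "good K n xs" using traj_good[OF _ K1 xs] nK by simp
  then show ?thesis using n1 nK bb_bounds[OF nN K1] by (simp add: good_def)
qed

lemma momR:
  assumes K1: "1 \<le> K" and n1: "1 \<le> n" and nN: "n + K \<le> K^2"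
  shows "measure_pmf.expectation (ic_traj K n) (\<lambda>xs. (real K - real (ic_R (xs!n)) - mu K n)^2) \<le> real n"
proof (rule moment_induct[where Z = "\<lambda>n xs. real K - real (ic_R (xs!n)) - mu K n" and N = "K^2 - K", OF _ _ _ K1 n1])
  show "measure_pmf.expectation (ic_traj K 1) (\<lambda>xs. (real K - real (ic_R (xs!1)) - mu K 1)^2) \<le> 1"
    by (simp add: traj1 ic_state1_def ic_R_def mu_def lam_def)
  show "K^2 - K \<le> K^2" by simp
  show "n \<le> K^2 - K" using nN by simp
next
  fix n xs assume n1: "1 \<le> n" and nN: "n < K^2 - K" and xs: "xs \<in> set_pmf (ic_traj K n)"
  have nN': "n + K \<le> K^2" using nN by simp
  note ctx = step_ctx[OF K1 n1 nN' xs]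
  obtain R C Gr Psi where e: "xs ! n = (R,C,Gr,Psi)" by (metis prod_cases4)
  have iv: "invc K n (R,C,Gr,Psi)" and nK: "n < K^2" using ctx e by auto
  define c where "c = (1 - bb K n) * mu K n"
  define x where "x = real K - real R"
  have "measure_pmf.expectation (ic_step K n (xs!n)) (\<lambda>s. (real K - real (ic_R ((xs@[s])!Suc n)) - mu K (Suc n))^2)
      = measure_pmf.expectation (ic_step K n (R,C,Gr,Psi)) (\<lambda>s. (real K - real (ic_R s) - c)^2)"
    using ctx n1 by (simp add: nth_append mu_Suc c_def e)
  also have "\<dots> = rho K n R * (x - 1 - c)^2 + (1 - rho K n R) * (x - c)^2"
    by (subst step_exp[OF iv nK, where h="\<lambda>a b d. (real K - real a - c)^2"]) (simp add: algebra_simps x_def)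
  also have "\<dots> \<le> (x - mu K n)^2 + 1"
    unfolding c_def using rho_bounds[OF iv nK] ctx by (intro alg_step) (auto simp: rho_eq x_def)
  finally show "measure_pmf.expectation (ic_step K n (xs!n)) (\<lambda>s. (real K - real (ic_R ((xs@[s])!Suc n)) - mu K (Suc n))^2)
      \<le> (real K - real (ic_R (xs!n)) - mu K n)^2 + 1" by (simp add: e x_def ic_R_def)
qed

lemma momC:
  assumes K1: "1 \<le> K" and n1: "1 \<le> n" and nN: "n + K \<le> K^2"
  shows "measure_pmf.expectation (ic_traj K n) (\<lambda>xs. (real K - real (ic_C (xs!n)) - mu K n)^2) \<le> real n"
proof (rule moment_induct[where Z = "\<lambda>n xs. real K - real (ic_C (xs!n)) - mu K n" and N = "K^2 - K", OF _ _ _ K1 n1])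
  show "measure_pmf.expectation (ic_traj K 1) (\<lambda>xs. (real K - real (ic_C (xs!1)) - mu K 1)^2) \<le> 1"
    by (simp add: traj1 ic_state1_def ic_C_def mu_def lam_def)
  show "K^2 - K \<le> K^2" by simp
  show "n \<le> K^2 - K" using nN by simp
next
  fix n xs assume n1: "1 \<le> n" and nN: "n < K^2 - K" and xs: "xs \<in> set_pmf (ic_traj K n)"
  have nN': "n + K \<le> K^2" using nN by simp
  note ctx = step_ctx[OF K1 n1 nN' xs]
  obtain R C Gr Psi where e: "xs ! n = (R,C,Gr,Psi)" by (metis prod_cases4)
  have iv: "invc K n (R,C,Gr,Psi)" and nK: "n < K^2" using ctx e by auto
  define c where "c = (1 - bb K n) * mu K n"
  define y where "y = real K - real C"
  define P where "P = rho K n R * kap K C + (1 - rho K n R) * piv K n R C"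
  have PE: "P = y * bb K n" unfolding P_def y_def by (rule pC_eq[OF iv nK])
  have P1: "P \<le> 1"
  proof -
    have "n \<le> R * C" by (rule n_le_RC[OF iv])
    also have "R * C \<le> K * C" using iv by (simp add: invc_def)
    finally have "real n \<le> real K * real C" by (metis of_nat_le_iff of_nat_mult)
    moreover have pos: "real K ^ 2 - real n > 0" using nK
      by (metis of_nat_less_iff of_nat_power diff_gt_0_iff_gt)
    ultimately show ?thesis unfolding PE y_def bb_def
      by (simp add: divide_simps power2_eq_square algebra_simps)
  qed
  have P0: "0 \<le> P" unfolding PE y_def using ctx iv by (auto simp: invc_def)
  have "measure_pmf.expectation (ic_step K n (xs!n)) (\<lambda>s. (real K - real (ic_C ((xs@[s])!Suc n)) - mu K (Suc n))^2)
      = measure_pmf.expectation (ic_step K n (R,C,Gr,Psi)) (\<lambda>s. (real K - real (ic_C s) - c)^2)"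
    using ctx n1 by (simp add: nth_append mu_Suc c_def e)
  also have "\<dots> = P * (y - 1 - c)^2 + (1 - P) * (y - c)^2"
    by (subst step_exp[OF iv nK, where h="\<lambda>a b d. (real K - real b - c)^2"]) (simp add: algebra_simps y_def P_def)
  also have "\<dots> \<le> (y - mu K n)^2 + 1"
    unfolding c_def using P0 P1 PE ctx by (intro alg_step) auto
  finally show "measure_pmf.expectation (ic_step K n (xs!n)) (\<lambda>s. (real K - real (ic_C ((xs@[s])!Suc n)) - mu K (Suc n))^2)
      \<le> (real K - real (ic_C (xs!n)) - mu K n)^2 + 1" by (simp add: e y_def ic_C_def)
qed

lemma momG:
  assumes K1: "1 \<le> K" and n1: "1 \<le> n" and nN: "n + K \<le> K^2"
  shows "measure_pmf.expectation (ic_traj K n) (\<lambda>xs. (real (ic_G (xs!n)) - AA K n xs)^2) \<le> real n"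
proof (rule moment_induct[where Z = "\<lambda>n xs. real (ic_G (xs!n)) - AA K n xs" and N = "K^2 - K", OF _ _ _ K1 n1])
  show "measure_pmf.expectation (ic_traj K 1) (\<lambda>xs. (real (ic_G (xs!1)) - AA K 1 xs)^2) \<le> 1"
    by (simp add: traj1 ic_state1_def ic_G_def AA_def)
  show "K^2 - K \<le> K^2" by simp
  show "n \<le> K^2 - K" using nN by simp
next
  fix n xs assume n1: "1 \<le> n" and nN: "n < K^2 - K" and xs: "xs \<in> set_pmf (ic_traj K n)"
  have nN': "n + K \<le> K^2" using nN by simp
  note ctx = step_ctx[OF K1 n1 nN' xs]
  obtain R C Gr Psi where e: "xs ! n = (R,C,Gr,Psi)" by (metis prod_cases4)
  have iv: "invc K n (R,C,Gr,Psi)" and nK: "n < K^2" using ctx e by auto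
  define A where "A = AA K n xs"
  define q where "q = qq K n (xs ! n)"
  have qe: "q = rho K n R * kap K C" using K1
    by (simp add: q_def qq_def e rho_def kap_def ic_R_def ic_C_def)
  have q0: "0 \<le> q" "q \<le> 1" unfolding qe using rho_bounds[OF iv nK] kap_bounds[OF iv]
    by (auto intro: mult_le_one)
  have "measure_pmf.expectation (ic_step K n (xs!n)) (\<lambda>s. (real (ic_G ((xs@[s])!Suc n)) - AA K (Suc n) (xs@[s]))^2)
      = measure_pmf.expectation (ic_step K n (R,C,Gr,Psi)) (\<lambda>s. (real (ic_G s) - (A + q))^2)"
    using ctx n1 by (simp add: nth_append AA_Suc A_def q_def e)
  also have "\<dots> = q * ((real (card Gr) - A) + 1 - q)^2 + (1 - q) * ((real (card Gr) - A) - q)^2"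
    by (subst step_exp[OF iv nK, where h="\<lambda>a b d. (real d - (A + q))^2"]) (simp add: algebra_simps qe)
  also have "\<dots> \<le> (real (card Gr) - A)^2 + 1"
    by (rule alg_step0[OF q0])
  finally show "measure_pmf.expectation (ic_step K n (xs!n)) (\<lambda>s. (real (ic_G ((xs@[s])!Suc n)) - AA K (Suc n) (xs@[s]))^2)
      \<le> (real (ic_G (xs!n)) - AA K n xs)^2 + 1" by (simp add: e A_def ic_G_def)
qed

lemma integrable_fin: "finite (set_pmf M) \<Longrightarrow> integrable (measure_pmf M) (f :: _ \<Rightarrow> real)"
  by (rule integrable_measure_pmf_finite)

lemma L1_from_L2:
  assumes fin: "finite (set_pmf M)" and v: "measure_pmf.expectation M (\<lambda>x. (X x)^2) \<le> v" and v0: "0 < v"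
  shows "measure_pmf.expectation M (\<lambda>x. \<bar>X x\<bar>) \<le> sqrt v"
proof -
  have sv: "sqrt v > 0" using v0 by simp
  have pt: "\<bar>X x\<bar> \<le> ((X x)^2 + v) / (2 * sqrt v)" for x
  proof -
    have "0 \<le> (\<bar>X x\<bar> - sqrt v)^2" by simp
    then have "2 * \<bar>X x\<bar> * sqrt v \<le> (X x)^2 + v" using v0
      by (simp add: power2_eq_square algebra_simps)
    then show ?thesis using sv by (simp add: field_simps)
  qed
  have "measure_pmf.expectation M (\<lambda>x. \<bar>X x\<bar>) \<le> measure_pmf.expectation M (\<lambda>x. ((X x)^2 + v) / (2 * sqrt v))"
    by (rule exp_mono_fin[OF fin]) (rule pt)
  also have "\<dots> = (measure_pmf.expectation M (\<lambda>x. (X x)^2) + v) / (2 * sqrt v)"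
    using fin by (simp add: exp_add_const)
  also have "\<dots> \<le> (v + v) / (2 * sqrt v)" using v sv by (intro divide_right_mono) auto
  also have "\<dots> = sqrt v" using v0 by (simp add: field_simps)
  finally show ?thesis .
qed

lemma markov_fin:
  assumes fin: "finite (set_pmf M)" and c: "0 < c"
  shows "measure_pmf.prob M {x. c \<le> \<bar>X x\<bar>} \<le> measure_pmf.expectation M (\<lambda>x. \<bar>X x\<bar>) / c"
  using integral_Markov_inequality_measure[of M "\<lambda>x. \<bar>X x\<bar>" "{}" c] fin c
  by (simp add: integrable_fin)

lemma full_prob_at:
  assumes "t \<le> K^2" "1 \<le> K"
  shows "measure_pmf.prob (ic_full K) {xs. Q (xs!t)} = measure_pmf.prob (ic_traj K t) {xs. Q (xs!t)}"
proof -
  have "ic_traj K t = map_pmf (take (Suc t)) (ic_full K)"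
    unfolding ic_full_def using traj_prefix[of t "K^2" K] assms by simp
  then show ?thesis by (simp add: vimage_def)
qed

lemma traj_exp_at:
  assumes "u \<le> t" "t \<le> K^2" "1 \<le> K"
  shows "measure_pmf.expectation (ic_traj K t) (\<lambda>xs. f (xs!u)) = measure_pmf.expectation (ic_traj K u) (\<lambda>xs. (f (xs!u)::real))"
proof -
  have "ic_traj K u = map_pmf (take (Suc u)) (ic_traj K t)"
    using traj_prefix[of u t K] assms by simp
  then show ?thesis by simp
qed

lemma absR:
  assumes K1: "1 \<le> K" and n1: "1 \<le> n" and nN: "n + K \<le> K^2"
  shows "measure_pmf.expectation (ic_traj K n) (\<lambda>xs. \<bar>real K - real (ic_R (xs!n)) - mu K n\<bar>) \<le> sqrt n"
  by (rule L1_from_L2[OF traj_finite momR[OF assms]]) (use assms in auto)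

lemma absC:
  assumes K1: "1 \<le> K" and n1: "1 \<le> n" and nN: "n + K \<le> K^2"
  shows "measure_pmf.expectation (ic_traj K n) (\<lambda>xs. \<bar>real K - real (ic_C (xs!n)) - mu K n\<bar>) \<le> sqrt n"
  by (rule L1_from_L2[OF traj_finite momC[OF assms]]) (use assms in auto)

lemma absG:
  assumes K1: "1 \<le> K" and n1: "1 \<le> n" and nN: "n + K \<le> K^2"
  shows "measure_pmf.expectation (ic_traj K n) (\<lambda>xs. \<bar>real (ic_G (xs!n)) - AA K n xs\<bar>) \<le> sqrt n"
  by (rule L1_from_L2[OF traj_finite momG[OF assms]]) (use assms in auto)

lemma concR:
  assumes K1: "1 \<le> K" and n1: "1 \<le> n" and nN: "n + K \<le> K^2" and c: "0 < c"
  shows "measure_pmf.prob (ic_full K) {xs. c \<le> \<bar>real K - real (ic_R (xs!n)) - mu K n\<bar>} \<le> sqrt n / c"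
proof -
  have nK: "n \<le> K^2" using nN by simp
  have "measure_pmf.prob (ic_full K) {xs. c \<le> \<bar>real K - real (ic_R (xs!n)) - mu K n\<bar>}
    = measure_pmf.prob (ic_traj K n) {xs. c \<le> \<bar>real K - real (ic_R (xs!n)) - mu K n\<bar>}"
    by (rule full_prob_at[OF nK K1])
  also have "\<dots> \<le> sqrt n / c"
    by (rule order.trans[OF markov_fin[OF traj_finite[OF nK K1] c]])
       (rule divide_right_mono[OF absR[OF assms(1-3)]], use c in simp)
  finally show ?thesis .
qed

lemma concC:
  assumes K1: "1 \<le> K" and n1: "1 \<le> n" and nN: "n + K \<le> K^2" and c: "0 < c"
  shows "measure_pmf.prob (ic_full K) {xs. c \<le> \<bar>real K - real (ic_C (xs!n)) - mu K n\<bar>} \<le> sqrt n / c"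
proof -
  have nK: "n \<le> K^2" using nN by simp
  have "measure_pmf.prob (ic_full K) {xs. c \<le> \<bar>real K - real (ic_C (xs!n)) - mu K n\<bar>}
    = measure_pmf.prob (ic_traj K n) {xs. c \<le> \<bar>real K - real (ic_C (xs!n)) - mu K n\<bar>}"
    by (rule full_prob_at[OF nK K1])
  also have "\<dots> \<le> sqrt n / c"
    by (rule order.trans[OF markov_fin[OF traj_finite[OF nK K1] c]])
       (rule divide_right_mono[OF absC[OF assms(1-3)]], use c in simp)
  finally show ?thesis .
qed

lemma lam_bounds:
  assumes K1: "1 \<le> K" and uN: "u + K \<le> K^2"
  shows "0 \<le> lam K u" "lam K u \<le> 1"
proof -
  have f: "0 \<le> 1 - bb K (Suc j) \<and> 1 - bb K (Suc j) \<le> 1" if "j < u - 1" for j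
  proof -
    have "Suc j + K \<le> K^2" using that uN by simp
    then show ?thesis using bb_bounds[of "Suc j" K] K1 by simp
  qed
  show "0 \<le> lam K u" unfolding lam_def by (rule prod_nonneg) (use f in auto)
  show "lam K u \<le> 1" unfolding lam_def by (rule prod_le_1) (use f in auto)
qed

lemma mu_bounds:
  assumes K1: "1 \<le> K" and uN: "u + K \<le> K^2"
  shows "0 \<le> mu K u" "mu K u \<le> real K"
proof -
  have "real K - 1 \<ge> 0" using K1 by simp
  then show "0 \<le> mu K u" "mu K u \<le> real K" unfolding mu_def using lam_bounds[OF assms]
    by (auto intro: mult_nonneg_nonneg mult_left_le[of "lam K u" "real K - 1", THEN order.trans])
qed

definition DD :: "nat \<Rightarrow> nat \<Rightarrow> real" where
  "DD K t = 1 + (\<Sum>j < t - 1. (mu K (Suc j))^2 / (real K ^ 2 - real (Suc j)))"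

lemma pw_bound:
  assumes K1: "1 \<le> K" and uN: "u + K \<le> K^2" and ut: "u \<le> t" and tN: "t + K \<le> K^2"
    and iv: "invc K u s"
  shows "\<bar>qq K u s - (mu K u)^2 / (real K ^ 2 - real u)\<bar> \<le>
     real K / (real K ^ 2 - real t) * (\<bar>real K - real (ic_R s) - mu K u\<bar> + \<bar>real K - real (ic_C s) - mu K u\<bar>)"
proof -
  obtain R C Gr Psi where e: "s = (R,C,Gr,Psi)" by (metis prod_cases4)
  have RK: "R \<le> K" "C \<le> K" using iv e by (auto simp: invc_def)
  define x where "x = real K - real R"
  define y where "y = real K - real C"
  define m where "m = mu K u"
  have x: "0 \<le> x" "x \<le> real K" using RK by (auto simp: x_def)
  have m: "0 \<le> m" "m \<le> real K" using mu_bounds[OF K1 uN] by (auto simp: m_def)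
  have Dt: "real K ^ 2 - real t > 0"
  proof -
    have a: "real t + real K \<le> real K ^ 2" using tN by (metis of_nat_add of_nat_le_iff of_nat_power)
    have k: "(1::real) \<le> real K" using K1 by simp
    show ?thesis using a k by linarith
  qed
  have Du: "real K ^ 2 - real t \<le> real K ^ 2 - real u" using ut by simp
  have "\<bar>x * y - m^2\<bar> = \<bar>x * (y - m) + m * (x - m)\<bar>" by (simp add: power2_eq_square algebra_simps)
  also have "\<dots> \<le> \<bar>x * (y - m)\<bar> + \<bar>m * (x - m)\<bar>" by (rule abs_triangle_ineq)
  also have "\<dots> = x * \<bar>y - m\<bar> + m * \<bar>x - m\<bar>" using x m by (simp add: abs_mult)
  also have "\<dots> \<le> real K * \<bar>y - m\<bar> + real K * \<bar>x - m\<bar>"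
    by (intro add_mono mult_right_mono) (use x m in auto)
  finally have num: "\<bar>x * y - m^2\<bar> \<le> real K * (\<bar>x - m\<bar> + \<bar>y - m\<bar>)" by (simp add: algebra_simps)
  have Dup: "0 < real K^2 - real u" using Dt Du by linarith
  have "qq K u s - m^2 / (real K ^ 2 - real u) = (x * y - m^2) / (real K ^ 2 - real u)"
    by (simp add: qq_def e ic_R_def ic_C_def x_def y_def diff_divide_distrib)
  then have "\<bar>qq K u s - m^2 / (real K ^ 2 - real u)\<bar> = \<bar>x * y - m^2\<bar> / (real K ^ 2 - real u)"
    using Dup by simp
  also have "\<dots> \<le> real K * (\<bar>x - m\<bar> + \<bar>y - m\<bar>) / (real K ^ 2 - real t)"
    by (rule frac_le) (use num Dt Du in auto)
  finally show ?thesis by (simp add: e x_def y_def m_def ic_R_def ic_C_def)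
qed

lemma absG_DD:
  assumes K1: "1 \<le> K" and t1: "1 \<le> t" and tN: "t + K \<le> K^2"
  shows "measure_pmf.expectation (ic_traj K t) (\<lambda>xs. \<bar>real (ic_G (xs!t)) - DD K t\<bar>)
     \<le> sqrt t + real (t - 1) * (real K / (real K ^ 2 - real t)) * (2 * sqrt t)"
proof -
  have tK: "t \<le> K^2" using tN by simp
  have fin: "finite (set_pmf (ic_traj K t))" by (rule traj_finite[OF tK K1])
  define w where "w = real K / (real K ^ 2 - real t)"
  have w0: "0 \<le> w"
  proof -
    have a: "real t + real K \<le> real K ^ 2" using tN by (metis of_nat_add of_nat_le_iff of_nat_power)
    have k: "(1::real) \<le> real K" using K1 by simp
    have "real K ^ 2 - real t > 0" using a k by linarith
    then show ?thesis by (simp add: w_def)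
  qed
  define eR where "eR = (\<lambda>u xs. \<bar>real K - real (ic_R (xs!u)) - mu K u\<bar>)"
  define eC where "eC = (\<lambda>u xs. \<bar>real K - real (ic_C (xs!u)) - mu K u\<bar>)"
  have pt: "\<bar>real (ic_G (xs!t)) - DD K t\<bar> \<le> \<bar>real (ic_G (xs!t)) - AA K t xs\<bar>
      + (\<Sum>j < t - 1. w * (eR (Suc j) xs + eC (Suc j) xs))" if xs: "xs \<in> set_pmf (ic_traj K t)" for xs
  proof -
    have g: "good K t xs" by (rule traj_good[OF tK K1 xs])
    have "\<bar>AA K t xs - DD K t\<bar> = \<bar>\<Sum>j < t - 1. (qq K (Suc j) (xs ! Suc j) - (mu K (Suc j))^2 / (real K ^ 2 - real (Suc j)))\<bar>"
      by (simp add: AA_def DD_def sum_subtractf)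
    also have "\<dots> \<le> (\<Sum>j < t - 1. \<bar>qq K (Suc j) (xs ! Suc j) - (mu K (Suc j))^2 / (real K ^ 2 - real (Suc j))\<bar>)"
      by (rule sum_abs)
    also have "\<dots> \<le> (\<Sum>j < t - 1. w * (eR (Suc j) xs + eC (Suc j) xs))"
    proof (rule sum_mono)
      fix j assume j: "j \<in> {..< t - 1}"
      have iv: "invc K (Suc j) (xs ! Suc j)" using g j by (simp add: good_def)
      show "\<bar>qq K (Suc j) (xs ! Suc j) - (mu K (Suc j))^2 / (real K ^ 2 - real (Suc j))\<bar> \<le> w * (eR (Suc j) xs + eC (Suc j) xs)"
        unfolding w_def eR_def eC_def by (rule pw_bound[OF K1 _ _ tN iv]) (use j tN in auto)
    qed
    finally have "\<bar>AA K t xs - DD K t\<bar> \<le> (\<Sum>j < t - 1. w * (eR (Suc j) xs + eC (Suc j) xs))" .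
    then show ?thesis by linarith
  qed
  have "measure_pmf.expectation (ic_traj K t) (\<lambda>xs. \<bar>real (ic_G (xs!t)) - DD K t\<bar>) \<le>
     measure_pmf.expectation (ic_traj K t) (\<lambda>xs. \<bar>real (ic_G (xs!t)) - AA K t xs\<bar>
      + (\<Sum>j < t - 1. w * (eR (Suc j) xs + eC (Suc j) xs)))"
    by (rule exp_mono_fin[OF fin pt])
  also have "\<dots> = measure_pmf.expectation (ic_traj K t) (\<lambda>xs. \<bar>real (ic_G (xs!t)) - AA K t xs\<bar>)
      + (\<Sum>j < t - 1. w * (measure_pmf.expectation (ic_traj K t) (eR (Suc j))
           + measure_pmf.expectation (ic_traj K t) (eC (Suc j))))"
    using fin by (simp add: Bochner_Integration.integral_add Bochner_Integration.integral_sum integrable_fin)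
  also have "\<dots> \<le> sqrt t + (\<Sum>j < t - 1. w * (sqrt t + sqrt t))"
  proof (rule add_mono)
    show "measure_pmf.expectation (ic_traj K t) (\<lambda>xs. \<bar>real (ic_G (xs!t)) - AA K t xs\<bar>) \<le> sqrt t"
      by (rule absG[OF K1 t1 tN])
  next
    show "(\<Sum>j < t - 1. w * (measure_pmf.expectation (ic_traj K t) (eR (Suc j))
           + measure_pmf.expectation (ic_traj K t) (eC (Suc j)))) \<le> (\<Sum>j < t - 1. w * (sqrt t + sqrt t))"
    proof (rule sum_mono)
      fix j assume j: "j \<in> {..< t - 1}"
      have u: "Suc j \<le> t" "1 \<le> Suc j" "Suc j + K \<le> K^2" using j tN by auto
      have st: "sqrt (real (Suc j)) \<le> sqrt t" using u by simp
      have "measure_pmf.expectation (ic_traj K t) (eR (Suc j)) = measure_pmf.expectation (ic_traj K (Suc j)) (eR (Suc j))"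
        unfolding eR_def by (rule traj_exp_at[OF u(1) tK K1])
      also have "\<dots> \<le> sqrt (Suc j)" unfolding eR_def by (rule absR[OF K1 u(2) u(3)])
      finally have a: "measure_pmf.expectation (ic_traj K t) (eR (Suc j)) \<le> sqrt t" using st by linarith
      have "measure_pmf.expectation (ic_traj K t) (eC (Suc j)) = measure_pmf.expectation (ic_traj K (Suc j)) (eC (Suc j))"
        unfolding eC_def by (rule traj_exp_at[OF u(1) tK K1])
      also have "\<dots> \<le> sqrt (Suc j)" unfolding eC_def by (rule absC[OF K1 u(2) u(3)])
      finally have b: "measure_pmf.expectation (ic_traj K t) (eC (Suc j)) \<le> sqrt t" using st by linarith
      show "w * (measure_pmf.expectation (ic_traj K t) (eR (Suc j)) + measure_pmf.expectation (ic_traj K t) (eC (Suc j)))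
         \<le> w * (sqrt t + sqrt t)" using a b w0 by (intro mult_left_mono) auto
    qed
  qed
  also have "\<dots> = sqrt t + real (t - 1) * w * (2 * sqrt t)" by simp
  finally show ?thesis by (simp add: w_def)
qed

lemma concG:
  assumes K1: "1 \<le> K" and t1: "1 \<le> t" and tN: "t + K \<le> K^2" and c: "0 < c"
  shows "measure_pmf.prob (ic_full K) {xs. c \<le> \<bar>real (ic_G (xs!t)) - DD K t\<bar>}
    \<le> (sqrt t + real (t - 1) * (real K / (real K ^ 2 - real t)) * (2 * sqrt t)) / c"
proof -
  have nK: "t \<le> K^2" using tN by simp
  have "measure_pmf.prob (ic_full K) {xs. c \<le> \<bar>real (ic_G (xs!t)) - DD K t\<bar>}
    = measure_pmf.prob (ic_traj K t) {xs. c \<le> \<bar>real (ic_G (xs!t)) - DD K t\<bar>}"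
    by (rule full_prob_at[OF nK K1])
  also have "\<dots> \<le> (sqrt t + real (t - 1) * (real K / (real K ^ 2 - real t)) * (2 * sqrt t)) / c"
    by (rule order.trans[OF markov_fin[OF traj_finite[OF nK K1] c]])
       (rule divide_right_mono[OF absG_DD[OF assms(1-3)]], use c in simp)
  finally show ?thesis .
qed

lemma ra_test: "(\<lambda>K::nat. (real K - 1)^2 / real K ^ 2) \<longlonglongrightarrow> 1"
  by real_asymp

lemma ra_test2: "(\<lambda>K::nat. 2 - 1 / real K) \<longlonglongrightarrow> 2"
  by real_asymp

lemma L_pow:
  fixes b :: "nat \<Rightarrow> real" and m :: "nat \<Rightarrow> nat"
  assumes b0: "eventually (\<lambda>K. 0 \<le> b K) sequentially" and bl: "b \<longlonglongrightarrow> 0" and mb: "(\<lambda>K. real (m K) * b K) \<longlonglongrightarrow> c"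
  shows "(\<lambda>K. (1 - b K) ^ m K) \<longlonglongrightarrow> exp (- c)"
proof -
  have ev00: "eventually (\<lambda>K. b K < 1/2) sequentially"
    using bl by (rule order_tendstoD(2)) simp
  have ev0: "eventually (\<lambda>K. b K \<le> 1/2) sequentially"
    using ev00 by eventually_elim simp
  have ev: "eventually (\<lambda>K. b K \<le> 1/2 \<and> 0 \<le> b K) sequentially"
    using ev0 b0 by eventually_elim simp
  have lo: "(\<lambda>K. - (real (m K) * b K) - 2 * (real (m K) * b K) * b K) \<longlonglongrightarrow> - c - 2 * c * 0"
    by (intro tendsto_intros mb bl)
  have hi: "(\<lambda>K. - (real (m K) * b K)) \<longlonglongrightarrow> - c"
    by (intro tendsto_intros mb)
  have L: "(\<lambda>K. real (m K) * ln (1 - b K)) \<longlonglongrightarrow> - c"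
  proof (rule tendsto_sandwich[OF _ _ _ hi])
    show "eventually (\<lambda>K. - (real (m K) * b K) - 2 * (real (m K) * b K) * b K \<le> real (m K) * ln (1 - b K)) sequentially"
      using ev
    proof eventually_elim
      case (elim K)
      have "- b K - 2 * (b K)^2 \<le> ln (1 - b K)" using elim by (intro ln_one_minus_pos_lower_bound) auto
      then have "real (m K) * (- b K - 2 * (b K)^2) \<le> real (m K) * ln (1 - b K)" by (intro mult_left_mono) auto
      then show ?case by (simp add: power2_eq_square algebra_simps)
    qed
    show "eventually (\<lambda>K. real (m K) * ln (1 - b K) \<le> - (real (m K) * b K)) sequentially"
      using ev
    proof eventually_elim
      case (elim K)
      have "ln (1 - b K) \<le> - b K" using elim by (intro ln_one_minus_pos_upper_bound) auto
      then have "real (m K) * ln (1 - b K) \<le> real (m K) * (- b K)" by (intro mult_left_mono) auto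
      then show ?case by simp
    qed
    show "(\<lambda>K. - (real (m K) * b K) - 2 * (real (m K) * b K) * b K) \<longlonglongrightarrow> - c" using lo by simp
  qed
  have "(\<lambda>K. exp (real (m K) * ln (1 - b K))) \<longlonglongrightarrow> exp (- c)" by (intro tendsto_intros L)
  moreover have "eventually (\<lambda>K. exp (real (m K) * ln (1 - b K)) = (1 - b K) ^ m K) sequentially"
    using ev
  proof eventually_elim
    case (elim K)
    then have "1 - b K > 0" by simp
    then show ?case by (simp add: exp_of_nat_mult ln_realpow[symmetric])
  qed
  ultimately show ?thesis by (rule Lim_transform_eventually)
qed

definition tt :: "real \<Rightarrow> nat \<Rightarrow> nat" where "tt s K = nat \<lfloor>s * real K\<rfloor>"

lemma tt_bounds: assumes "0 < s" shows "s * real K - 1 \<le> real (tt s K)" "real (tt s K) \<le> s * real K"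
proof -
  have "0 \<le> s * real K" using assms by simp
  then have e: "real (tt s K) = real_of_int \<lfloor>s * real K\<rfloor>" by (simp add: tt_def)
  show "s * real K - 1 \<le> real (tt s K)" unfolding e by linarith
  show "real (tt s K) \<le> s * real K" unfolding e by linarith
qed

lemma tt_lim: assumes "0 < s" shows "(\<lambda>K. real (tt s K) / real K) \<longlonglongrightarrow> s"
proof (rule tendsto_sandwich[where f = "\<lambda>K. s - 1 / real K" and h = "\<lambda>K. s"])
  show "eventually (\<lambda>K. s - 1 / real K \<le> real (tt s K) / real K) sequentially"
    using eventually_gt_at_top[of 0]
  proof eventually_elim
    case (elim K)
    then have "s - 1 / real K = (s * real K - 1) / real K" by (simp add: field_simps)
    also have "\<dots> \<le> real (tt s K) / real K" using tt_bounds[OF assms, of K] elim by (intro divide_right_mono) auto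
    finally show ?case .
  qed
  show "eventually (\<lambda>K. real (tt s K) / real K \<le> s) sequentially"
    using eventually_gt_at_top[of 0]
  proof eventually_elim
    case (elim K) then show ?case using tt_bounds[OF assms, of K] by (simp add: field_simps)
  qed
  show "(\<lambda>K. s - 1 / real K) \<longlonglongrightarrow> s" by real_asymp
qed simp

lemma tt1_lim: assumes "0 < s" shows "(\<lambda>K. real (tt s K - 1) / real K) \<longlonglongrightarrow> s"
proof (rule tendsto_sandwich[where f = "\<lambda>K. real (tt s K) / real K - 1 / real K" and h = "\<lambda>K. real (tt s K) / real K"])
  show "eventually (\<lambda>K. real (tt s K) / real K - 1 / real K \<le> real (tt s K - 1) / real K) sequentially"
    by (intro always_eventually allI) (simp add: diff_divide_distrib[symmetric] divide_right_mono)
  show "eventually (\<lambda>K. real (tt s K - 1) / real K \<le> real (tt s K) / real K) sequentially"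
    by (intro always_eventually allI) (simp add: divide_right_mono)
  have "(\<lambda>K. 1 / real K) \<longlonglongrightarrow> 0" by real_asymp
  then show "(\<lambda>K. real (tt s K) / real K - 1 / real K) \<longlonglongrightarrow> s" using tendsto_diff[OF tt_lim[OF assms]] by fastforce
  show "(\<lambda>K. real (tt s K) / real K) \<longlonglongrightarrow> s" by (rule tt_lim[OF assms])
qed

lemma ttK2_lim: assumes "0 < s" shows "(\<lambda>K. real K ^ 2 / (real K ^ 2 - real (tt s K))) \<longlonglongrightarrow> 1"
proof -
  have l1: "(\<lambda>K. 1 / real K) \<longlonglongrightarrow> 0" by real_asymp
  have a: "(\<lambda>K. 1 / (1 - (real (tt s K) / real K) * (1 / real K))) \<longlonglongrightarrow> 1 / (1 - s * 0)"
    by (intro tendsto_intros tt_lim[OF assms] l1) simp_all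
  have "eventually (\<lambda>K. 1 / (1 - (real (tt s K) / real K) * (1 / real K)) = real K ^ 2 / (real K ^ 2 - real (tt s K))) sequentially"
    using eventually_gt_at_top[of 0]
  proof eventually_elim
    case (elim K) then show ?case by (simp add: field_simps power2_eq_square)
  qed
  from Lim_transform_eventually[OF _ this] a show ?thesis by simp
qed

lemma ev_tt: assumes s: "0 < s"
  shows "eventually (\<lambda>K. 1 \<le> K \<and> 1 \<le> tt s K \<and> tt s K + K \<le> K^2) sequentially"
proof -
  have "eventually (\<lambda>K. real K \<ge> 2/s + s + 1) sequentially" by real_asymp
  then show ?thesis
  proof eventually_elim
    case (elim K)
    have K1: "1 \<le> real K" using elim s by (smt (verit) divide_pos_pos)
    have "2 / s \<le> real K" using elim s by simp
    then have "2 \<le> s * real K" using s by (simp add: field_simps)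
    then have t1: "1 \<le> real (tt s K)" using tt_bounds[OF s, of K] by linarith
    have "0 < 2 / s" using s by simp
    then have "s + 1 \<le> real K" using elim by linarith
    then have "(s + 1) * real K \<le> real K * real K" using K1 by (intro mult_right_mono) auto
    then have "real (tt s K) + real K \<le> real K ^ 2" using tt_bounds[OF s, of K]
      by (simp add: power2_eq_square algebra_simps)
    then have "tt s K + K \<le> K^2" by (metis of_nat_add of_nat_le_iff of_nat_power)
    then show ?case using K1 t1 by simp
  qed
qed

lemma lam_sandwich:
  assumes K1: "1 \<le> K" and ut: "u \<le> t" and tN: "t + K \<le> K^2"
  shows "(1 - bb K t) ^ (u - 1) \<le> lam K u" "lam K u \<le> (1 - 1 / real K) ^ (u - 1)"
proof -
  have Dt: "real K ^ 2 - real t > 0"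
  proof -
    have a: "real t + real K \<le> real K ^ 2" using tN by (metis of_nat_add of_nat_le_iff of_nat_power)
    have k: "(1::real) \<le> real K" using K1 by simp
    show ?thesis using a k by linarith
  qed
  have f: "0 \<le> 1 - bb K t \<and> 1 - bb K t \<le> 1 - bb K (Suc j) \<and> 0 \<le> 1 - bb K (Suc j) \<and> 1 - bb K (Suc j) \<le> 1 - 1 / real K"
    if j: "j < u - 1" for j
  proof -
    have sj: "Suc j < t" using j ut by simp
    have D1: "real K ^ 2 - real t \<le> real K ^ 2 - real (Suc j)" using sj by simp
    have D2: "real K ^ 2 - real (Suc j) \<le> real K ^ 2" by simp
    have Kp: "0 < real K" using K1 by simp
    have Dj: "real K ^ 2 - real (Suc j) > 0" using D1 Dt by linarith
    have a: "bb K (Suc j) \<le> bb K t" unfolding bb_def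
      by (rule divide_left_mono) (use D1 Dt Kp Dj in \<open>auto intro: mult_pos_pos\<close>)
    have b: "1 / real K \<le> bb K (Suc j)"
    proof -
      have "1 / real K = real K / real K ^ 2" using Kp by (simp add: power2_eq_square)
      also have "\<dots> \<le> bb K (Suc j)" unfolding bb_def
        by (rule divide_left_mono) (use D1 D2 Dt Kp Dj in \<open>auto intro: mult_pos_pos\<close>)
      finally show ?thesis .
    qed
    have c: "bb K t \<le> 1" using bb_bounds[OF tN K1] by simp
    have d: "bb K (Suc j) \<le> 1" using a c by simp
    show ?thesis using a b c d by simp
  qed
  have "(1 - bb K t) ^ (u - 1) = (\<Prod>j<u - 1. 1 - bb K t)" by simp
  also have "\<dots> \<le> lam K u" unfolding lam_def by (rule prod_mono) (use f in auto)
  finally show "(1 - bb K t) ^ (u - 1) \<le> lam K u" .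
  have "lam K u \<le> (\<Prod>j<u - 1. 1 - 1 / real K)" unfolding lam_def by (rule prod_mono) (use f in auto)
  then show "lam K u \<le> (1 - 1 / real K) ^ (u - 1)" by simp
qed

lemma bbt_lims: assumes s: "0 < s"
  shows "(\<lambda>K. bb K (tt s K)) \<longlonglongrightarrow> 0"
    "(\<lambda>K. real K * bb K (tt s K)) \<longlonglongrightarrow> 1"
    "(\<lambda>K. real (tt s K - 1) * bb K (tt s K)) \<longlonglongrightarrow> s"
    "eventually (\<lambda>K. 0 < bb K (tt s K)) sequentially"
proof -
  have l1: "(\<lambda>K. 1 / real K) \<longlonglongrightarrow> 0" by real_asymp
  have e1: "eventually (\<lambda>K. (1 / real K) * (real K ^ 2 / (real K ^ 2 - real (tt s K))) = bb K (tt s K)) sequentially"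
    using eventually_gt_at_top[of 0] by eventually_elim (simp add: bb_def field_simps power2_eq_square)
  have "(\<lambda>K. (1 / real K) * (real K ^ 2 / (real K ^ 2 - real (tt s K)))) \<longlonglongrightarrow> 0 * 1"
    by (intro tendsto_intros ttK2_lim[OF s] l1)
  then show "(\<lambda>K. bb K (tt s K)) \<longlonglongrightarrow> 0" using Lim_transform_eventually[OF _ e1] by simp
  have e2: "eventually (\<lambda>K. real K ^ 2 / (real K ^ 2 - real (tt s K)) = real K * bb K (tt s K)) sequentially"
    using eventually_gt_at_top[of 0] by eventually_elim (simp add: bb_def field_simps power2_eq_square)
  show "(\<lambda>K. real K * bb K (tt s K)) \<longlonglongrightarrow> 1" using Lim_transform_eventually[OF ttK2_lim[OF s] e2] .
  have e3: "eventually (\<lambda>K. (real (tt s K - 1) / real K) * (real K ^ 2 / (real K ^ 2 - real (tt s K))) = real (tt s K - 1) * bb K (tt s K)) sequentially"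
    using eventually_gt_at_top[of 0] by eventually_elim (simp add: bb_def field_simps power2_eq_square)
  have "(\<lambda>K. (real (tt s K - 1) / real K) * (real K ^ 2 / (real K ^ 2 - real (tt s K)))) \<longlonglongrightarrow> s * 1"
    by (intro tendsto_intros ttK2_lim[OF s] tt1_lim[OF s])
  then show "(\<lambda>K. real (tt s K - 1) * bb K (tt s K)) \<longlonglongrightarrow> s" using Lim_transform_eventually[OF _ e3] by simp
  show "eventually (\<lambda>K. 0 < bb K (tt s K)) sequentially"
    using ev_tt[OF s]
  proof eventually_elim
    case (elim K)
    then have "real (tt s K) + real K \<le> real K ^ 2" by (metis of_nat_add of_nat_le_iff of_nat_power)
    then have "real K ^ 2 - real (tt s K) > 0" using elim by simp
    then show ?case using elim by (simp add: bb_def)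
  qed
qed

lemma mu_lim: assumes s: "0 < s"
  shows "(\<lambda>K. mu K (tt s K) / real K) \<longlonglongrightarrow> exp (- s)"
proof (rule tendsto_sandwich[where f = "\<lambda>K. ((real K - 1) / real K) * (1 - bb K (tt s K)) ^ (tt s K - 1)"
      and h = "\<lambda>K. ((real K - 1) / real K) * (1 - 1 / real K) ^ (tt s K - 1)"])
  show "eventually (\<lambda>K. ((real K - 1) / real K) * (1 - bb K (tt s K)) ^ (tt s K - 1) \<le> mu K (tt s K) / real K) sequentially"
    using ev_tt[OF s]
  proof eventually_elim
    case (elim K)
    have "(1 - bb K (tt s K)) ^ (tt s K - 1) \<le> lam K (tt s K)" using lam_sandwich[of K "tt s K" "tt s K"] elim by simp
    moreover have "0 \<le> (real K - 1) / real K" using elim by simp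
    ultimately have "((real K - 1) / real K) * (1 - bb K (tt s K)) ^ (tt s K - 1) \<le> ((real K - 1) / real K) * lam K (tt s K)"
      by (intro mult_left_mono)
    moreover have "mu K (tt s K) / real K = ((real K - 1) / real K) * lam K (tt s K)" by (simp add: mu_def)
    ultimately show ?case by linarith
  qed
  show "eventually (\<lambda>K. mu K (tt s K) / real K \<le> ((real K - 1) / real K) * (1 - 1 / real K) ^ (tt s K - 1)) sequentially"
    using ev_tt[OF s]
  proof eventually_elim
    case (elim K)
    have "lam K (tt s K) \<le> (1 - 1 / real K) ^ (tt s K - 1)" using lam_sandwich[of K "tt s K" "tt s K"] elim by simp
    moreover have "0 \<le> (real K - 1) / real K" using elim by simp
    ultimately have "((real K - 1) / real K) * lam K (tt s K) \<le> ((real K - 1) / real K) * (1 - 1 / real K) ^ (tt s K - 1)"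
      by (intro mult_left_mono)
    moreover have "mu K (tt s K) / real K = ((real K - 1) / real K) * lam K (tt s K)" by (simp add: mu_def)
    ultimately show ?case by linarith
  qed
  have r1: "(\<lambda>K. (real K - 1) / real K) \<longlonglongrightarrow> 1" by real_asymp
  have p1: "(\<lambda>K. (1 - bb K (tt s K)) ^ (tt s K - 1)) \<longlonglongrightarrow> exp (- s)"
    by (rule L_pow) (use bbt_lims[OF s] in \<open>auto elim: eventually_mono\<close>)
  have p2: "(\<lambda>K. (1 - 1 / real K) ^ (tt s K - 1)) \<longlonglongrightarrow> exp (- s)"
  proof (rule L_pow)
    show "(\<lambda>K. 1 / real K) \<longlonglongrightarrow> 0" by real_asymp
    show "(\<lambda>K. real (tt s K - 1) * (1 / real K)) \<longlonglongrightarrow> s" using tt1_lim[OF s] by simp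
  qed simp
  show "(\<lambda>K. ((real K - 1) / real K) * (1 - bb K (tt s K)) ^ (tt s K - 1)) \<longlonglongrightarrow> exp (- s)"
    using tendsto_mult[OF r1 p1] by simp
  show "(\<lambda>K. ((real K - 1) / real K) * (1 - 1 / real K) ^ (tt s K - 1)) \<longlonglongrightarrow> exp (- s)"
    using tendsto_mult[OF r1 p2] by simp
qed

lemma geom: "(x::real) \<noteq> 1 \<Longrightarrow> (\<Sum>j<n. x ^ j) = (1 - x ^ n) / (1 - x)"
  by (simp add: sum_gp_strict)

lemma DD_lower:
  assumes K1: "1 \<le> K" and t1: "1 \<le> t" and tN: "t + K \<le> K^2"
  shows "1 + ((real K - 1)^2 / real K ^ 2) * (\<Sum>j < t - 1. ((1 - bb K t)^2) ^ j) \<le> DD K t"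
proof -
  have Kp: "0 < real K" using K1 by simp
  have B: "0 \<le> bb K t" "bb K t \<le> 1" using bb_bounds[OF tN K1] by auto
  have "((real K - 1)^2 / real K ^ 2) * (\<Sum>j < t - 1. ((1 - bb K t)^2) ^ j)
      = (\<Sum>j < t - 1. (real K - 1)^2 * ((1 - bb K t)^2) ^ j / real K ^ 2)"
    by (simp add: sum_distrib_left)
  also have "\<dots> \<le> (\<Sum>j < t - 1. (mu K (Suc j))^2 / (real K ^ 2 - real (Suc j)))"
  proof (rule sum_mono)
    fix j assume j: "j \<in> {..< t - 1}"
    have u: "Suc j \<le> t" using j by auto
    have uN: "Suc j + K \<le> K^2" using u tN by simp
    have lo: "(1 - bb K t) ^ j \<le> lam K (Suc j)" using lam_sandwich(1)[OF K1 u tN] by simp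
    have "0 \<le> (1 - bb K t) ^ j" using B by simp
    have m1: "(real K - 1) * (1 - bb K t) ^ j \<le> mu K (Suc j)"
      unfolding mu_def using lo K1 by (intro mult_left_mono) auto
    have m0: "0 \<le> (real K - 1) * (1 - bb K t) ^ j" using B K1 by simp
    have sq: "((real K - 1) * (1 - bb K t) ^ j)^2 \<le> (mu K (Suc j))^2"
      by (rule power_mono[OF m1 m0])
    have eq: "((real K - 1) * (1 - bb K t) ^ j)^2 = (real K - 1)^2 * ((1 - bb K t)^2) ^ j"
      by (simp add: power_mult_distrib power_mult[symmetric] mult.commute)
    have Du: "0 < real K ^ 2 - real (Suc j)"
    proof -
      have a: "real (Suc j) + real K \<le> real K ^ 2" using uN by (metis of_nat_add of_nat_le_iff of_nat_power)
      show ?thesis using a Kp by linarith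
    qed
    have "(real K - 1)^2 * ((1 - bb K t)^2) ^ j / real K ^ 2 \<le> (mu K (Suc j))^2 / real K ^ 2"
      using sq eq by (intro divide_right_mono) auto
    also have "\<dots> \<le> (mu K (Suc j))^2 / (real K ^ 2 - real (Suc j))"
      by (rule divide_left_mono) (use Du Kp in auto)
    finally show "(real K - 1)^2 * ((1 - bb K t)^2) ^ j / real K ^ 2 \<le> (mu K (Suc j))^2 / (real K ^ 2 - real (Suc j))" .
  qed
  finally show ?thesis unfolding DD_def by simp
qed

lemma DD_upper:
  assumes K1: "1 \<le> K" and t1: "1 \<le> t" and tN: "t + K \<le> K^2"
  shows "DD K t \<le> 1 + ((real K - 1)^2 / (real K ^ 2 - real t)) * (\<Sum>j < t - 1. ((1 - 1 / real K)^2) ^ j)"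
proof -
  have Kp: "0 < real K" using K1 by simp
  have Dt: "real K ^ 2 - real t > 0"
  proof -
    have a: "real t + real K \<le> real K ^ 2" using tN by (metis of_nat_add of_nat_le_iff of_nat_power)
    show ?thesis using a Kp by linarith
  qed
  have "(\<Sum>j < t - 1. (mu K (Suc j))^2 / (real K ^ 2 - real (Suc j)))
     \<le> (\<Sum>j < t - 1. (real K - 1)^2 * ((1 - 1 / real K)^2) ^ j / (real K ^ 2 - real t))"
  proof (rule sum_mono)
    fix j assume j: "j \<in> {..< t - 1}"
    have u: "Suc j \<le> t" using j by auto
    have uN: "Suc j + K \<le> K^2" using u tN by simp
    have hi: "lam K (Suc j) \<le> (1 - 1 / real K) ^ j" using lam_sandwich(2)[OF K1 u tN] by simp
    have m1: "mu K (Suc j) \<le> (real K - 1) * (1 - 1 / real K) ^ j"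
      unfolding mu_def using hi K1 by (intro mult_left_mono) auto
    have m0: "0 \<le> mu K (Suc j)" using mu_bounds[OF K1 uN] by simp
    have sq: "(mu K (Suc j))^2 \<le> ((real K - 1) * (1 - 1 / real K) ^ j)^2"
      by (rule power_mono[OF m1 m0])
    have eq: "((real K - 1) * (1 - 1 / real K) ^ j)^2 = (real K - 1)^2 * ((1 - 1 / real K)^2) ^ j"
      by (simp add: power_mult_distrib power_mult[symmetric] mult.commute)
    have Du: "real K ^ 2 - real t \<le> real K ^ 2 - real (Suc j)" using u by simp
    have "(mu K (Suc j))^2 / (real K ^ 2 - real (Suc j)) \<le> (mu K (Suc j))^2 / (real K ^ 2 - real t)"
    proof (rule divide_left_mono)
      show "0 < (real K ^ 2 - real (Suc j)) * (real K ^ 2 - real t)" using Du Dt by (intro mult_pos_pos) linarith+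
    qed (use Du Dt in auto)
    also have "\<dots> \<le> (real K - 1)^2 * ((1 - 1 / real K)^2) ^ j / (real K ^ 2 - real t)"
      using sq eq Dt by (intro divide_right_mono) auto
    finally show "(mu K (Suc j))^2 / (real K ^ 2 - real (Suc j)) \<le> (real K - 1)^2 * ((1 - 1 / real K)^2) ^ j / (real K ^ 2 - real t)" .
  qed
  also have "\<dots> = ((real K - 1)^2 / (real K ^ 2 - real t)) * (\<Sum>j < t - 1. ((1 - 1 / real K)^2) ^ j)"
    by (simp add: sum_distrib_left)
  finally show ?thesis unfolding DD_def by simp
qed

lemma alg_l: fixes K c N B :: real assumes "K \<noteq> 0" "B \<noteq> 0" "2 - B \<noteq> 0"
  shows "(1 + c * (N / (B * (2 - B)))) / K = 1 / K + c * N / ((K * B) * (2 - B))"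
  using assms by (simp add: field_simps)

lemma alg_h: fixes K c N e D :: real assumes "K \<noteq> 0" "e \<noteq> 0" "D \<noteq> 0"
  shows "(1 + (c / D) * (N / (e / K))) / K = 1 / K + ((c / K^2) * (K^2 / D)) * N / e"
  using assms by (simp add: field_simps power2_eq_square)

lemma DD_lim: assumes s: "0 < s"
  shows "(\<lambda>K. DD K (tt s K) / real K) \<longlonglongrightarrow> (1 - exp (- (2 * s))) / 2"
proof (rule tendsto_sandwich[where
      f = "\<lambda>K. 1 / real K + ((real K - 1)^2 / real K ^ 2) * (1 - (1 - bb K (tt s K)) ^ (2 * (tt s K - 1)))
              / ((real K * bb K (tt s K)) * (2 - bb K (tt s K)))"
  and h = "\<lambda>K. 1 / real K + (((real K - 1)^2 / real K ^ 2) * (real K ^ 2 / (real K ^ 2 - real (tt s K))))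
              * (1 - (1 - 1 / real K) ^ (2 * (tt s K - 1))) / (2 - 1 / real K)"])
  show "eventually (\<lambda>K. 1 / real K + ((real K - 1)^2 / real K ^ 2) * (1 - (1 - bb K (tt s K)) ^ (2 * (tt s K - 1)))
              / ((real K * bb K (tt s K)) * (2 - bb K (tt s K))) \<le> DD K (tt s K) / real K) sequentially"
    using ev_tt[OF s] bbt_lims(4)[OF s]
  proof eventually_elim
    case (elim K)
    define t where "t = tt s K"
    define B where "B = bb K t"
    have K1: "1 \<le> K" and t1: "1 \<le> t" and tN: "t + K \<le> K^2" using elim by (auto simp: t_def)
    have B0: "0 < B" and B1: "B \<le> 1" using elim bb_bounds[OF tN K1] by (auto simp: B_def t_def)
    have Kp: "0 < real K" using K1 by simp
    have hx: "1 - (1 - B)^2 = B * (2 - B)" by (simp add: power2_eq_square algebra_simps)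
    have x1: "(1 - B)^2 \<noteq> 1" using hx B0 B1 by auto
    have pos: "0 < B * (2 - B)" using B0 B1 by simp
    have "DD K t \<ge> 1 + ((real K - 1)^2 / real K ^ 2) * ((1 - ((1 - B)^2) ^ (t - 1)) / (B * (2 - B)))"
    proof -
      have g: "(\<Sum>j < t - 1. ((1 - B)^2) ^ j) = (1 - ((1 - B)^2) ^ (t - 1)) / (B * (2 - B))"
        using geom[OF x1, of "t - 1"] hx by simp
      show ?thesis using DD_lower[OF K1 t1 tN, folded B_def, unfolded g] .
    qed
    then have "DD K t / real K \<ge> (1 + ((real K - 1)^2 / real K ^ 2) * ((1 - ((1 - B)^2) ^ (t - 1)) / (B * (2 - B)))) / real K"
      using Kp by (intro divide_right_mono) auto
    moreover have "(1 + ((real K - 1)^2 / real K ^ 2) * ((1 - ((1 - B)^2) ^ (t - 1)) / (B * (2 - B)))) / real K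
       = 1 / real K + ((real K - 1)^2 / real K ^ 2) * (1 - (1 - B) ^ (2 * (t - 1))) / ((real K * B) * (2 - B))"
      unfolding power_mult by (rule alg_l) (use Kp B0 B1 in auto)
    ultimately show ?case by (simp add: t_def B_def)
  qed
  show "eventually (\<lambda>K. DD K (tt s K) / real K \<le> 1 / real K + (((real K - 1)^2 / real K ^ 2) * (real K ^ 2 / (real K ^ 2 - real (tt s K))))
              * (1 - (1 - 1 / real K) ^ (2 * (tt s K - 1))) / (2 - 1 / real K)) sequentially"
    using ev_tt[OF s]
  proof eventually_elim
    case (elim K)
    define t where "t = tt s K"
    have K1: "1 \<le> K" and t1: "1 \<le> t" and tN: "t + K \<le> K^2" using elim by (auto simp: t_def)
    have Kp: "0 < real K" using K1 by simp
    have Dt: "real K ^ 2 - real t > 0"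
    proof -
      have a: "real t + real K \<le> real K ^ 2" using tN by (metis of_nat_add of_nat_le_iff of_nat_power)
      show ?thesis using a Kp by linarith
    qed
    have hz: "1 - (1 - 1 / real K)^2 = (2 - 1 / real K) / real K" using Kp
      by (simp add: power2_eq_square field_simps)
    have z2: "0 < 2 - 1 / real K" using K1 by (simp add: field_simps)
    have z1: "(1 - 1 / real K)^2 \<noteq> 1" using hz z2 Kp by auto
    have "DD K t \<le> 1 + ((real K - 1)^2 / (real K ^ 2 - real t)) * ((1 - ((1 - 1 / real K)^2) ^ (t - 1)) / ((2 - 1 / real K) / real K))"
    proof -
      have g: "(\<Sum>j < t - 1. ((1 - 1 / real K)^2) ^ j) = (1 - ((1 - 1 / real K)^2) ^ (t - 1)) / ((2 - 1 / real K) / real K)"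
        using geom[OF z1, of "t - 1"] hz by simp
      show ?thesis using DD_upper[OF K1 t1 tN, unfolded g] .
    qed
    then have "DD K t / real K \<le> (1 + ((real K - 1)^2 / (real K ^ 2 - real t)) * ((1 - ((1 - 1 / real K)^2) ^ (t - 1)) / ((2 - 1 / real K) / real K))) / real K"
      using Kp by (intro divide_right_mono) auto
    moreover have "(1 + ((real K - 1)^2 / (real K ^ 2 - real t)) * ((1 - ((1 - 1 / real K)^2) ^ (t - 1)) / ((2 - 1 / real K) / real K))) / real K
       = 1 / real K + (((real K - 1)^2 / real K ^ 2) * (real K ^ 2 / (real K ^ 2 - real t)))
              * (1 - (1 - 1 / real K) ^ (2 * (t - 1))) / (2 - 1 / real K)"
      unfolding power_mult by (rule alg_h) (use Kp Dt z2 in auto)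
    ultimately show ?case by (simp add: t_def)
  qed
  have l1: "(\<lambda>K. 1 / real K) \<longlonglongrightarrow> 0" by real_asymp
  have a1: "(\<lambda>K. (real K - 1)^2 / real K ^ 2) \<longlonglongrightarrow> 1" by real_asymp
  have a4: "(\<lambda>K. 2 - 1 / real K) \<longlonglongrightarrow> 2" by real_asymp
  have p1: "(\<lambda>K. (1 - bb K (tt s K)) ^ (2 * (tt s K - 1))) \<longlonglongrightarrow> exp (- (2 * s))"
  proof (rule L_pow)
    show "eventually (\<lambda>K. 0 \<le> bb K (tt s K)) sequentially"
      using bbt_lims(4)[OF s] by eventually_elim simp
    show "(\<lambda>K. bb K (tt s K)) \<longlonglongrightarrow> 0" by (rule bbt_lims(1)[OF s])
    have "(\<lambda>K. 2 * (real (tt s K - 1) * bb K (tt s K))) \<longlonglongrightarrow> 2 * s"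
      by (intro tendsto_intros bbt_lims(3)[OF s])
    then show "(\<lambda>K. real (2 * (tt s K - 1)) * bb K (tt s K)) \<longlonglongrightarrow> 2 * s" by (simp add: mult.assoc)
  qed
  have p2: "(\<lambda>K. (1 - 1 / real K) ^ (2 * (tt s K - 1))) \<longlonglongrightarrow> exp (- (2 * s))"
  proof (rule L_pow)
    show "(\<lambda>K. 1 / real K) \<longlonglongrightarrow> 0" by (rule l1)
    have "(\<lambda>K. 2 * (real (tt s K - 1) / real K)) \<longlonglongrightarrow> 2 * s"
      by (intro tendsto_intros tt1_lim[OF s])
    then show "(\<lambda>K. real (2 * (tt s K - 1)) * (1 / real K)) \<longlonglongrightarrow> 2 * s" by simp
  qed simp
  have "(\<lambda>K. 1 / real K + ((real K - 1)^2 / real K ^ 2) * (1 - (1 - bb K (tt s K)) ^ (2 * (tt s K - 1)))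
              / ((real K * bb K (tt s K)) * (2 - bb K (tt s K)))) \<longlonglongrightarrow> 0 + 1 * (1 - exp (- (2 * s))) / (1 * (2 - 0))"
    by (intro tendsto_intros l1 a1 p1 bbt_lims[OF s]) simp
  then show "(\<lambda>K. 1 / real K + ((real K - 1)^2 / real K ^ 2) * (1 - (1 - bb K (tt s K)) ^ (2 * (tt s K - 1)))
              / ((real K * bb K (tt s K)) * (2 - bb K (tt s K)))) \<longlonglongrightarrow> (1 - exp (- (2 * s))) / 2" by simp
  have "(\<lambda>K. 1 / real K + (((real K - 1)^2 / real K ^ 2) * (real K ^ 2 / (real K ^ 2 - real (tt s K))))
              * (1 - (1 - 1 / real K) ^ (2 * (tt s K - 1))) / (2 - 1 / real K)) \<longlonglongrightarrow> 0 + (1 * 1) * (1 - exp (- (2 * s))) / 2"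
    by (intro tendsto_intros l1 a1 a4 p2 ttK2_lim[OF s]) simp
  then show "(\<lambda>K. 1 / real K + (((real K - 1)^2 / real K ^ 2) * (real K ^ 2 / (real K ^ 2 - real (tt s K))))
              * (1 - (1 - 1 / real K) ^ (2 * (tt s K - 1))) / (2 - 1 / real K)) \<longlonglongrightarrow> (1 - exp (- (2 * s))) / 2" by simp
qed

lemma tend0_bound:
  assumes "eventually (\<lambda>K. P K \<le> B K) sequentially" "B \<longlonglongrightarrow> 0" "\<And>K. 0 \<le> P K"
  shows "P \<longlonglongrightarrow> (0::real)"
  by (rule tendsto_sandwich[where f = "\<lambda>_. 0" and h = B]) (use assms in auto)

lemma prob_mono_sub: "A \<subseteq> B \<Longrightarrow> measure_pmf.prob M A \<le> measure_pmf.prob M B"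
  by (rule measure_pmf.finite_measure_mono) auto

lemma sqrt_t_lim: assumes s: "0 < s" shows "(\<lambda>K. sqrt (real (tt s K)) / real K) \<longlonglongrightarrow> 0"
proof -
  have l: "(\<lambda>K. sqrt (1 / real K)) \<longlonglongrightarrow> 0" by real_asymp
  have "(\<lambda>K. sqrt (real (tt s K) / real K) * sqrt (1 / real K)) \<longlonglongrightarrow> sqrt s * 0"
    by (intro tendsto_intros tt_lim[OF s] l)
  moreover have "eventually (\<lambda>K. sqrt (real (tt s K) / real K) * sqrt (1 / real K) = sqrt (real (tt s K)) / real K) sequentially"
    using eventually_gt_at_top[of 0]
  proof eventually_elim
    case (elim K)
    then have "sqrt (real (tt s K) / real K) * sqrt (1 / real K) = sqrt (real (tt s K) / (real K)^2)"
      by (simp add: real_sqrt_mult[symmetric] power2_eq_square)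
    also have "\<dots> = sqrt (real (tt s K)) / real K" by (simp add: real_sqrt_divide)
    finally show ?case .
  qed
  ultimately show ?thesis using Lim_transform_eventually by fastforce
qed

lemma prob_R:
  assumes s: "0 < s" and eta: "0 < \<eta>"
  shows "(\<lambda>K. measure_pmf.prob (ic_full K) {xs. \<eta> \<le> \<bar>real (ic_R (xs ! tt s K)) / real K - (1 - exp (- s))\<bar>}) \<longlonglongrightarrow> 0"
proof (rule tend0_bound)
  have ev2: "eventually (\<lambda>K. dist (mu K (tt s K) / real K) (exp (- s)) < \<eta> / 2) sequentially"
  proof -
    have "0 < \<eta> / 2" using eta by simp
    from tendstoD[OF mu_lim[OF s] this] show ?thesis .
  qed
  show "eventually (\<lambda>K. measure_pmf.prob (ic_full K) {xs. \<eta> \<le> \<bar>real (ic_R (xs ! tt s K)) / real K - (1 - exp (- s))\<bar>}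
      \<le> (2 / \<eta>) * (sqrt (real (tt s K)) / real K)) sequentially"
    using ev_tt[OF s] ev2
  proof eventually_elim
    case (elim K)
    define t where "t = tt s K"
    have K1: "1 \<le> K" and t1: "1 \<le> t" and tN: "t + K \<le> K^2" using elim by (auto simp: t_def)
    have Kp: "0 < real K" using K1 by simp
    have c: "0 < \<eta> * real K / 2" using Kp eta by simp
    have sub: "{xs. \<eta> \<le> \<bar>real (ic_R (xs ! t)) / real K - (1 - exp (- s))\<bar>}
       \<subseteq> {xs. \<eta> * real K / 2 \<le> \<bar>real K - real (ic_R (xs!t)) - mu K t\<bar>}"
    proof safe
      fix xs assume a: "\<eta> \<le> \<bar>real (ic_R (xs ! t)) / real K - (1 - exp (- s))\<bar>"
      show "\<eta> * real K / 2 \<le> \<bar>real K - real (ic_R (xs!t)) - mu K t\<bar>"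
      proof (rule ccontr)
        assume "\<not> ?thesis"
        then have b: "\<bar>real K - real (ic_R (xs!t)) - mu K t\<bar> / real K < \<eta> / 2" using Kp by (simp add: field_simps)
        have e: "real (ic_R (xs ! t)) / real K - (1 - exp (- s))
           = - ((real K - real (ic_R (xs!t)) - mu K t) / real K) + (exp (- s) - mu K t / real K)"
          using Kp by (simp add: field_simps)
        have "\<bar>real (ic_R (xs ! t)) / real K - (1 - exp (- s))\<bar>
            \<le> \<bar>real K - real (ic_R (xs!t)) - mu K t\<bar> / real K + \<bar>exp (- s) - mu K t / real K\<bar>"
          unfolding e using Kp by (simp add: abs_triangle_ineq4[THEN order.trans] abs_triangle_ineq[THEN order.trans])
        moreover have "\<bar>exp (- s) - mu K t / real K\<bar> < \<eta> / 2" using elim by (simp add: t_def dist_real_def abs_minus_commute)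
        ultimately show False using a b by linarith
      qed
    qed
    have "measure_pmf.prob (ic_full K) {xs. \<eta> \<le> \<bar>real (ic_R (xs ! t)) / real K - (1 - exp (- s))\<bar>}
       \<le> measure_pmf.prob (ic_full K) {xs. \<eta> * real K / 2 \<le> \<bar>real K - real (ic_R (xs!t)) - mu K t\<bar>}"
      by (rule prob_mono_sub[OF sub])
    also have "\<dots> \<le> sqrt t / (\<eta> * real K / 2)" by (rule concR[OF K1 t1 tN c])
    also have "\<dots> = (2 / \<eta>) * (sqrt (real t) / real K)" by (simp add: field_simps)
    finally show ?case by (simp add: t_def)
  qed
  show "(\<lambda>K. (2 / \<eta>) * (sqrt (real (tt s K)) / real K)) \<longlonglongrightarrow> 0"
    using tendsto_mult[OF tendsto_const sqrt_t_lim[OF s], of "2 / \<eta>"] by simp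
qed simp

lemma prob_C:
  assumes s: "0 < s" and eta: "0 < \<eta>"
  shows "(\<lambda>K. measure_pmf.prob (ic_full K) {xs. \<eta> \<le> \<bar>real (ic_C (xs ! tt s K)) / real K - (1 - exp (- s))\<bar>}) \<longlonglongrightarrow> 0"
proof (rule tend0_bound)
  have ev2: "eventually (\<lambda>K. dist (mu K (tt s K) / real K) (exp (- s)) < \<eta> / 2) sequentially"
  proof -
    have "0 < \<eta> / 2" using eta by simp
    from tendstoD[OF mu_lim[OF s] this] show ?thesis .
  qed
  show "eventually (\<lambda>K. measure_pmf.prob (ic_full K) {xs. \<eta> \<le> \<bar>real (ic_C (xs ! tt s K)) / real K - (1 - exp (- s))\<bar>}
      \<le> (2 / \<eta>) * (sqrt (real (tt s K)) / real K)) sequentially"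
    using ev_tt[OF s] ev2
  proof eventually_elim
    case (elim K)
    define t where "t = tt s K"
    have K1: "1 \<le> K" and t1: "1 \<le> t" and tN: "t + K \<le> K^2" using elim by (auto simp: t_def)
    have Kp: "0 < real K" using K1 by simp
    have c: "0 < \<eta> * real K / 2" using Kp eta by simp
    have sub: "{xs. \<eta> \<le> \<bar>real (ic_C (xs ! t)) / real K - (1 - exp (- s))\<bar>}
       \<subseteq> {xs. \<eta> * real K / 2 \<le> \<bar>real K - real (ic_C (xs!t)) - mu K t\<bar>}"
    proof safe
      fix xs assume a: "\<eta> \<le> \<bar>real (ic_C (xs ! t)) / real K - (1 - exp (- s))\<bar>"
      show "\<eta> * real K / 2 \<le> \<bar>real K - real (ic_C (xs!t)) - mu K t\<bar>"
      proof (rule ccontr)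
        assume "\<not> ?thesis"
        then have b: "\<bar>real K - real (ic_C (xs!t)) - mu K t\<bar> / real K < \<eta> / 2" using Kp by (simp add: field_simps)
        have e: "real (ic_C (xs ! t)) / real K - (1 - exp (- s))
           = - ((real K - real (ic_C (xs!t)) - mu K t) / real K) + (exp (- s) - mu K t / real K)"
          using Kp by (simp add: field_simps)
        have "\<bar>real (ic_C (xs ! t)) / real K - (1 - exp (- s))\<bar>
            \<le> \<bar>real K - real (ic_C (xs!t)) - mu K t\<bar> / real K + \<bar>exp (- s) - mu K t / real K\<bar>"
          unfolding e using Kp by (simp add: abs_triangle_ineq4[THEN order.trans] abs_triangle_ineq[THEN order.trans])
        moreover have "\<bar>exp (- s) - mu K t / real K\<bar> < \<eta> / 2" using elim by (simp add: t_def dist_real_def abs_minus_commute)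
        ultimately show False using a b by linarith
      qed
    qed
    have "measure_pmf.prob (ic_full K) {xs. \<eta> \<le> \<bar>real (ic_C (xs ! t)) / real K - (1 - exp (- s))\<bar>}
       \<le> measure_pmf.prob (ic_full K) {xs. \<eta> * real K / 2 \<le> \<bar>real K - real (ic_C (xs!t)) - mu K t\<bar>}"
      by (rule prob_mono_sub[OF sub])
    also have "\<dots> \<le> sqrt t / (\<eta> * real K / 2)" by (rule concC[OF K1 t1 tN c])
    also have "\<dots> = (2 / \<eta>) * (sqrt (real t) / real K)" by (simp add: field_simps)
    finally show ?case by (simp add: t_def)
  qed
  show "(\<lambda>K. (2 / \<eta>) * (sqrt (real (tt s K)) / real K)) \<longlonglongrightarrow> 0"
    using tendsto_mult[OF tendsto_const sqrt_t_lim[OF s], of "2 / \<eta>"] by simp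
qed simp

lemma prob_G:
  assumes s: "0 < s" and eta: "0 < \<eta>"
  shows "(\<lambda>K. measure_pmf.prob (ic_full K) {xs. \<eta> \<le> \<bar>real (ic_G (xs ! tt s K)) / real K - (1 - exp (- (2 * s))) / 2\<bar>}) \<longlonglongrightarrow> 0"
proof (rule tend0_bound)
  have ev2: "eventually (\<lambda>K. dist (DD K (tt s K) / real K) ((1 - exp (- (2 * s))) / 2) < \<eta> / 2) sequentially"
  proof -
    have "0 < \<eta> / 2" using eta by simp
    from tendstoD[OF DD_lim[OF s] this] show ?thesis .
  qed
  show "eventually (\<lambda>K. measure_pmf.prob (ic_full K) {xs. \<eta> \<le> \<bar>real (ic_G (xs ! tt s K)) / real K - (1 - exp (- (2 * s))) / 2\<bar>}
      \<le> (2 / \<eta>) * (sqrt (real (tt s K)) / real K + 2 * (real (tt s K - 1) / real K) * (real K ^ 2 / (real K ^ 2 - real (tt s K))) * (sqrt (real (tt s K)) / real K))) sequentially"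
    using ev_tt[OF s] ev2
  proof eventually_elim
    case (elim K)
    define t where "t = tt s K"
    define g where "g = (1 - exp (- (2 * s))) / 2"
    have K1: "1 \<le> K" and t1: "1 \<le> t" and tN: "t + K \<le> K^2" using elim by (auto simp: t_def)
    have Kp: "0 < real K" using K1 by simp
    have Dt: "real K ^ 2 - real t > 0"
    proof -
      have a: "real t + real K \<le> real K ^ 2" using tN by (metis of_nat_add of_nat_le_iff of_nat_power)
      show ?thesis using a Kp by linarith
    qed
    have c: "0 < \<eta> * real K / 2" using Kp eta by simp
    have sub: "{xs. \<eta> \<le> \<bar>real (ic_G (xs ! t)) / real K - g\<bar>}
       \<subseteq> {xs. \<eta> * real K / 2 \<le> \<bar>real (ic_G (xs!t)) - DD K t\<bar>}"
    proof safe
      fix xs assume a: "\<eta> \<le> \<bar>real (ic_G (xs ! t)) / real K - g\<bar>"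
      show "\<eta> * real K / 2 \<le> \<bar>real (ic_G (xs!t)) - DD K t\<bar>"
      proof (rule ccontr)
        assume "\<not> ?thesis"
        then have b: "\<bar>real (ic_G (xs!t)) - DD K t\<bar> / real K < \<eta> / 2" using Kp by (simp add: field_simps)
        have e: "real (ic_G (xs ! t)) / real K - g
           = ((real (ic_G (xs!t)) - DD K t) / real K) + (DD K t / real K - g)"
          using Kp by (simp add: field_simps)
        have "\<bar>real (ic_G (xs ! t)) / real K - g\<bar>
            \<le> \<bar>real (ic_G (xs!t)) - DD K t\<bar> / real K + \<bar>DD K t / real K - g\<bar>"
          unfolding e using Kp by (simp add: abs_triangle_ineq[THEN order.trans])
        moreover have "\<bar>DD K t / real K - g\<bar> < \<eta> / 2" using elim by (simp add: t_def g_def dist_real_def)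
        ultimately show False using a b by linarith
      qed
    qed
    have "measure_pmf.prob (ic_full K) {xs. \<eta> \<le> \<bar>real (ic_G (xs ! t)) / real K - g\<bar>}
       \<le> measure_pmf.prob (ic_full K) {xs. \<eta> * real K / 2 \<le> \<bar>real (ic_G (xs!t)) - DD K t\<bar>}"
      by (rule prob_mono_sub[OF sub])
    also have "\<dots> \<le> (sqrt t + real (t - 1) * (real K / (real K ^ 2 - real t)) * (2 * sqrt t)) / (\<eta> * real K / 2)"
      by (rule concG[OF K1 t1 tN c])
    also have "\<dots> = (2 / \<eta>) * (sqrt (real t) / real K + 2 * (real (t - 1) / real K) * (real K ^ 2 / (real K ^ 2 - real t)) * (sqrt (real t) / real K))"
      using Kp Dt eta by (simp add: field_simps power2_eq_square)
    finally show ?case by (simp add: t_def g_def)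
  qed
  have "(\<lambda>K. (2 / \<eta>) * (sqrt (real (tt s K)) / real K + 2 * (real (tt s K - 1) / real K) * (real K ^ 2 / (real K ^ 2 - real (tt s K))) * (sqrt (real (tt s K)) / real K)))
     \<longlonglongrightarrow> (2 / \<eta>) * (0 + 2 * s * 1 * 0)"
    by (intro tendsto_intros sqrt_t_lim[OF s] tt1_lim[OF s] ttK2_lim[OF s])
  then show "(\<lambda>K. (2 / \<eta>) * (sqrt (real (tt s K)) / real K + 2 * (real (tt s K - 1) / real K) * (real K ^ 2 / (real K ^ 2 - real (tt s K))) * (sqrt (real (tt s K)) / real K)))
     \<longlonglongrightarrow> 0" by simp
qed simp

lemma full_good: "1 \<le> K \<Longrightarrow> xs \<in> set_pmf (ic_full K) \<Longrightarrow> good K (K^2) xs"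
  unfolding ic_full_def by (rule traj_good) auto

lemma mono_gen:
  assumes "\<forall>u<n. f (xs!u) \<le> (f (xs!Suc u) :: nat)" "a \<le> b" "b \<le> n"
  shows "f (xs!a) \<le> f (xs!b)"
  using assms(2,3)
proof (induction b)
  case 0 then show ?case by simp
next
  case (Suc b)
  show ?case
  proof (cases "a = Suc b")
    case True then show ?thesis by simp
  next
    case False
    then have "f (xs!a) \<le> f (xs!b)" using Suc by simp
    also have "\<dots> \<le> f (xs!Suc b)" using assms(1) Suc by simp
    finally show ?thesis .
  qed
qed

lemma monoR: "good K n xs \<Longrightarrow> a \<le> b \<Longrightarrow> b \<le> n \<Longrightarrow> ic_R (xs!a) \<le> ic_R (xs!b)"
  by (rule mono_gen[of n ic_R xs]) (auto simp: good_def)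
lemma monoC: "good K n xs \<Longrightarrow> a \<le> b \<Longrightarrow> b \<le> n \<Longrightarrow> ic_C (xs!a) \<le> ic_C (xs!b)"
  by (rule mono_gen[of n ic_C xs]) (auto simp: good_def)
lemma monoG: "good K n xs \<Longrightarrow> a \<le> b \<Longrightarrow> b \<le> n \<Longrightarrow> ic_G (xs!a) \<le> ic_G (xs!b)"
  by (rule mono_gen[of n ic_G xs]) (auto simp: good_def)

lemma ivt_G:
  assumes g: "good K n xs"
  shows "u \<le> n \<Longrightarrow> m \<le> ic_G (xs!u) \<Longrightarrow> \<exists>v\<le>u. ic_G (xs!v) = m"
proof (induction u)
  case 0
  have "ic_G (xs!0) = 0" using g by (simp add: good_def ic_G_def ic_state0_def)
  then show ?case using 0 by auto
next
  case (Suc u)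
  show ?case
  proof (cases "m \<le> ic_G (xs!u)")
    case True
    have "u \<le> n" using Suc by simp
    then obtain v where "v \<le> u" "ic_G (xs ! v) = m" using Suc.IH True by blast
    then show ?thesis by (intro exI[of _ v]) auto
  next
    case False
    have "ic_G (xs!Suc u) \<le> ic_G (xs!u) + 1" using g Suc by (simp add: good_def)
    then have "ic_G (xs!Suc u) = m" using False Suc by simp
    then show ?thesis by blast
  qed
qed

lemma tau_Some: "ic_tau m xs = Some t \<Longrightarrow> t < length xs \<and> ic_G (xs!t) = m \<and> (\<forall>u<t. ic_G (xs!u) \<noteq> m)"
proof -
  assume a: "ic_tau m xs = Some t"
  then have ex: "\<exists>t < length xs. ic_G (xs ! t) = m" and e: "t = (LEAST t. t < length xs \<and> ic_G (xs ! t) = m)"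
    by (auto simp: ic_tau_def split: if_splits)
  have "t < length xs \<and> ic_G (xs ! t) = m" unfolding e using ex by (metis (mono_tags, lifting) LeastI)
  moreover have "\<forall>u<t. ic_G (xs!u) \<noteq> m"
  proof (intro allI impI)
    fix u assume "u < t"
    then have "\<not> (u < length xs \<and> ic_G (xs ! u) = m)" unfolding e by (rule not_less_Least)
    then show "ic_G (xs!u) \<noteq> m" using \<open>u < t\<close> calculation by auto
  qed
  ultimately show ?thesis by blast
qed

lemma tau_lt:
  assumes g: "good K n xs" and u: "u \<le> n" and G: "ic_G (xs!u) < m"
  shows "case ic_tau m xs of None \<Rightarrow> True | Some t \<Rightarrow> u < t"
proof (cases "ic_tau m xs")
  case None then show ?thesis by simp
next
  case (Some t)
  note ts = tau_Some[OF Some]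
  have "\<not> t \<le> u"
  proof
    assume "t \<le> u"
    then have "ic_G (xs!t) \<le> ic_G (xs!u)" using monoG[OF g _ u] by simp
    then show False using ts G by simp
  qed
  then show ?thesis using Some by simp
qed

lemma tau_ge:
  assumes g: "good K n xs" and u: "u \<le> n" and G: "m \<le> ic_G (xs!u)"
  shows "\<exists>t. ic_tau m xs = Some t \<and> t \<le> u"
proof -
  obtain v where v: "v \<le> u" "ic_G (xs!v) = m" using ivt_G[OF g u G] by blast
  have len: "length xs = Suc n" using g by (simp add: good_def)
  have vl: "v < length xs" using v u len by simp
  then have ex: "\<exists>t < length xs. ic_G (xs ! t) = m" using v by blast
  have "(LEAST t. t < length xs \<and> ic_G (xs ! t) = m) \<le> v" by (rule Least_le) (use vl v in auto)
  then show ?thesis using ex v by (auto simp: ic_tau_def)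
qed

lemma prob_union: "measure_pmf.prob M (A \<union> B) \<le> measure_pmf.prob M A + measure_pmf.prob M B"
  by (rule measure_Un_le) auto

lemma prob_supp_sub:
  assumes "\<And>x. x \<in> set_pmf M \<Longrightarrow> x \<in> A \<Longrightarrow> x \<in> B"
  shows "measure_pmf.prob M A \<le> measure_pmf.prob M B"
proof -
  have "measure_pmf.prob M A = measure_pmf.prob M (A \<inter> set_pmf M)" by (simp add: measure_Int_set_pmf)
  also have "\<dots> \<le> measure_pmf.prob M B" by (rule prob_mono_sub) (use assms in auto)
  finally show ?thesis .
qed

lemma nat_le_floor: "real t \<le> x \<Longrightarrow> t \<le> nat \<lfloor>x\<rfloor>"
proof -
  assume a: "real t \<le> x"
  have "0 \<le> x" using a of_nat_0_le_iff order.trans by blast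
  then have "int t \<le> \<lfloor>x\<rfloor>" using a by (simp add: le_floor_iff)
  then show ?thesis by (simp add: le_nat_iff)
qed

lemma one_minus_exp_le: "0 \<le> d \<Longrightarrow> 1 - exp (- d) \<le> (d::real)"
  using exp_ge_add_one_self[of "- d"] by simp

context
  fixes \<epsilon> :: real
  assumes e0: "0 < \<epsilon>" and e1: "\<epsilon> < 1/2"
begin

definition sst :: real where "sst = (1/2) * ln (1 / (1 - 2 * \<epsilon>))"

lemma sst_pos: "0 < sst"
proof -
  have "1 < 1 / (1 - 2 * \<epsilon>)" using e0 e1 by (simp add: field_simps)
  then have "0 < ln (1 / (1 - 2 * \<epsilon>))" by (rule ln_gt_zero)
  then show ?thesis unfolding sst_def by simp
qed

lemma exp2sst: "exp (- (2 * sst)) = 1 - 2 * \<epsilon>"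
proof -
  have p: "0 < 1 - 2 * \<epsilon>" using e1 by simp
  have "- (2 * sst) = ln (1 - 2 * \<epsilon>)" unfolding sst_def using p by (simp add: ln_div)
  then show ?thesis using p by simp
qed

lemma expsst: "exp (- sst) = sqrt (1 - 2 * \<epsilon>)"
proof -
  have "(exp (- sst))^2 = exp (- (2 * sst))" by (simp add: exp_double[symmetric] power2_eq_square exp_add[symmetric])
  then have "(exp (- sst))^2 = 1 - 2 * \<epsilon>" using exp2sst by simp
  then show ?thesis by (intro real_sqrt_unique[symmetric]) auto
qed

definition gg :: "real \<Rightarrow> real" where "gg s = (1 - exp (- (2 * s))) / 2"

lemma gg_sst: "gg sst = \<epsilon>" unfolding gg_def exp2sst by simp

lemma gg_less: "a < b \<Longrightarrow> gg a < gg b" unfolding gg_def by simp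

lemma partA:
  assumes d0: "0 < d"
  shows "(\<lambda>K. measure_pmf.prob (ic_full K)
            {xs. case ic_tau (nat \<lfloor>\<epsilon> * real K\<rfloor>) xs of None \<Rightarrow> True
               | Some t \<Rightarrow> \<bar>real t / real K - (1/2) * ln (1 / (1 - 2 * \<epsilon>))\<bar> > d}) \<longlonglongrightarrow> 0"
proof -
  define d' where "d' = min d (sst / 2)"
  have d'0: "0 < d'" using d0 sst_pos by (simp add: d'_def)
  define s1 where "s1 = sst - d'"
  define s2 where "s2 = sst + d'"
  have s1p: "0 < s1" using sst_pos by (simp add: s1_def d'_def)
  have s2p: "0 < s2" using sst_pos d'0 by (simp add: s2_def)
  have g1: "gg s1 < \<epsilon>" using gg_less[of s1 sst] d'0 gg_sst by (simp add: s1_def)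
  have g2: "\<epsilon> < gg s2" using gg_less[of sst s2] d'0 gg_sst by (simp add: s2_def)
  define \<eta> where "\<eta> = min (\<epsilon> - gg s1) (gg s2 - \<epsilon>) / 2"
  have eta0: "0 < \<eta>" using g1 g2 by (simp add: \<eta>_def)
  define E1 where "E1 = (\<lambda>K. {xs. \<eta> \<le> \<bar>real (ic_G (xs ! tt s1 K)) / real K - (1 - exp (- (2 * s1))) / 2\<bar>})"
  define E2 where "E2 = (\<lambda>K. {xs. \<eta> \<le> \<bar>real (ic_G (xs ! tt s2 K)) / real K - (1 - exp (- (2 * s2))) / 2\<bar>})"
  have lim1: "(\<lambda>K. measure_pmf.prob (ic_full K) (E1 K)) \<longlonglongrightarrow> 0" unfolding E1_def by (rule prob_G[OF s1p eta0])
  have lim2: "(\<lambda>K. measure_pmf.prob (ic_full K) (E2 K)) \<longlonglongrightarrow> 0" unfolding E2_def by (rule prob_G[OF s2p eta0])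
  have evK: "eventually (\<lambda>K. 1 / \<eta> < real K) sequentially" by real_asymp
  show ?thesis
  proof (rule tend0_bound)
    show "(\<lambda>K. measure_pmf.prob (ic_full K) (E1 K) + measure_pmf.prob (ic_full K) (E2 K)) \<longlonglongrightarrow> 0"
      using tendsto_add[OF lim1 lim2] by simp
    show "eventually (\<lambda>K. measure_pmf.prob (ic_full K)
            {xs. case ic_tau (nat \<lfloor>\<epsilon> * real K\<rfloor>) xs of None \<Rightarrow> True
               | Some t \<Rightarrow> \<bar>real t / real K - (1/2) * ln (1 / (1 - 2 * \<epsilon>))\<bar> > d}
        \<le> measure_pmf.prob (ic_full K) (E1 K) + measure_pmf.prob (ic_full K) (E2 K)) sequentially"
      using ev_tt[OF s1p] ev_tt[OF s2p] evK
    proof eventually_elim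
      case (elim K)
      define t1 where "t1 = tt s1 K"
      define t2 where "t2 = tt s2 K"
      define m where "m = nat \<lfloor>\<epsilon> * real K\<rfloor>"
      have K1: "1 \<le> K" and t1N: "t1 \<le> K^2" and t2N: "t2 \<le> K^2" using elim by (auto simp: t1_def t2_def)
      have Kp: "0 < real K" using K1 by simp
      have etaK: "1 < \<eta> * real K" using elim eta0 by (simp add: field_simps)
      have mr: "\<epsilon> * real K - 1 < real m" "real m \<le> \<epsilon> * real K"
      proof -
        have "0 \<le> \<epsilon> * real K" using e0 by simp
        then have "real m = real_of_int \<lfloor>\<epsilon> * real K\<rfloor>" by (simp add: m_def)
        then show "\<epsilon> * real K - 1 < real m" "real m \<le> \<epsilon> * real K" by linarith+
      qed
      have "measure_pmf.prob (ic_full K)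
            {xs. case ic_tau (nat \<lfloor>\<epsilon> * real K\<rfloor>) xs of None \<Rightarrow> True
               | Some t \<Rightarrow> \<bar>real t / real K - (1/2) * ln (1 / (1 - 2 * \<epsilon>))\<bar> > d}
          \<le> measure_pmf.prob (ic_full K) (E1 K \<union> E2 K)"
      proof (rule prob_supp_sub)
        fix xs assume xs: "xs \<in> set_pmf (ic_full K)"
          and bad: "xs \<in> {xs. case ic_tau (nat \<lfloor>\<epsilon> * real K\<rfloor>) xs of None \<Rightarrow> True
               | Some t \<Rightarrow> \<bar>real t / real K - (1/2) * ln (1 / (1 - 2 * \<epsilon>))\<bar> > d}"
        show "xs \<in> E1 K \<union> E2 K"
        proof (rule ccontr)
          assume "xs \<notin> E1 K \<union> E2 K"
          then have n1: "\<bar>real (ic_G (xs ! t1)) / real K - gg s1\<bar> < \<eta>"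
            and n2: "\<bar>real (ic_G (xs ! t2)) / real K - gg s2\<bar> < \<eta>"
            by (auto simp: E1_def E2_def t1_def t2_def gg_def)
          have g: "good K (K^2) xs" by (rule full_good[OF K1 xs])
          have eta1: "gg s1 + \<eta> \<le> \<epsilon> - \<eta>" and eta2: "\<epsilon> + \<eta> \<le> gg s2 - \<eta>" by (auto simp: \<eta>_def)
          have "real (ic_G (xs ! t1)) / real K - gg s1 < \<eta>" using n1 by (simp add: abs_less_iff)
          then have "real (ic_G (xs ! t1)) / real K < \<epsilon> - \<eta>" using eta1 by linarith
          then have "real (ic_G (xs ! t1)) < (\<epsilon> - \<eta>) * real K" using Kp by (simp add: field_simps)
          also have "\<dots> < real m" using mr etaK by (simp add: algebra_simps)
          finally have G1: "ic_G (xs ! t1) < m" by simp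
          have "- \<eta> < real (ic_G (xs ! t2)) / real K - gg s2" using n2 by (simp add: abs_less_iff)
          then have "\<epsilon> + \<eta> < real (ic_G (xs ! t2)) / real K" using eta2 by linarith
          then have "(\<epsilon> + \<eta>) * real K < real (ic_G (xs ! t2))" using Kp by (simp add: field_simps)
          then have "real m \<le> real (ic_G (xs ! t2))" using mr eta0 Kp
            by (smt (verit, best) mult_nonneg_nonneg distrib_right)
          then have G2: "m \<le> ic_G (xs ! t2)" by simp
          obtain t where tS: "ic_tau m xs = Some t" and tt2: "t \<le> t2" using tau_ge[OF g t2N G2] by blast
          have tt1: "t1 < t" using tau_lt[OF g t1N G1] tS by simp
          have a1: "real t \<le> s2 * real K" using tt2 tt_bounds(2)[OF s2p, of K] by (simp add: t2_def)
          have a2: "s1 * real K \<le> real t"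
          proof -
            have "s1 * real K - 1 \<le> real t1" using tt_bounds(1)[OF s1p, of K] by (simp add: t1_def)
            moreover have "real t1 + 1 \<le> real t" using tt1 by simp
            ultimately show ?thesis by linarith
          qed
          have "\<bar>real t / real K - sst\<bar> \<le> d'"
          proof -
            have "real t / real K \<le> s2" using a1 Kp by (simp add: field_simps)
            moreover have "s1 \<le> real t / real K" using a2 Kp by (simp add: field_simps)
            ultimately show ?thesis by (simp add: s1_def s2_def abs_le_iff)
          qed
          then have "\<bar>real t / real K - sst\<bar> \<le> d" by (simp add: d'_def)
          then show False using bad tS by (simp add: m_def sst_def)
        qed
      qed
      also have "\<dots> \<le> measure_pmf.prob (ic_full K) (E1 K) + measure_pmf.prob (ic_full K) (E2 K)"
        by (rule prob_union)
      finally show ?case .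
    qed
  qed simp
qed


lemma exp_diff_le: fixes a d :: real assumes "0 \<le> a" "0 \<le> d" shows "exp (- a) - exp (- (a + d)) \<le> d"
proof -
  have ee: "exp (- (a + d)) = exp (- a) * exp (- d)" using mult_exp_exp[of "- a" "- d"] by simp
  have "exp (- a) - exp (- (a + d)) = exp (- a) * (1 - exp (- d))" unfolding ee by (simp add: algebra_simps)
  also have "\<dots> \<le> 1 * (1 - exp (- d))" using assms by (intro mult_right_mono) auto
  also have "\<dots> \<le> d" using one_minus_exp_le[OF assms(2)] by simp
  finally show ?thesis .
qed

lemma prob_union5: "measure_pmf.prob M (A \<union> B \<union> C \<union> D \<union> E) \<le>
   measure_pmf.prob M A + measure_pmf.prob M B + measure_pmf.prob M C + measure_pmf.prob M D + measure_pmf.prob M E"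
proof -
  have "measure_pmf.prob M (A \<union> B \<union> C \<union> D \<union> E) \<le> measure_pmf.prob M (A \<union> B \<union> C \<union> D) + measure_pmf.prob M E"
    by (rule prob_union)
  moreover have "measure_pmf.prob M (A \<union> B \<union> C \<union> D) \<le> measure_pmf.prob M (A \<union> B \<union> C) + measure_pmf.prob M D"
    by (rule prob_union)
  moreover have "measure_pmf.prob M (A \<union> B \<union> C) \<le> measure_pmf.prob M (A \<union> B) + measure_pmf.prob M C"
    by (rule prob_union)
  moreover have "measure_pmf.prob M (A \<union> B) \<le> measure_pmf.prob M A + measure_pmf.prob M B"
    by (rule prob_union)
  ultimately show ?thesis by linarith
qed

lemma partB:
  assumes de: "0 < \<delta>"
  shows "(\<lambda>K. measure_pmf.prob (ic_full K)
            {xs. case ic_tau (nat \<lfloor>\<epsilon> * real K\<rfloor>) xs of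
                   None \<Rightarrow> True
                 | Some t \<Rightarrow> dist (real (ic_R (xs ! t)) / real K, real (ic_C (xs ! t)) / real K)
                                  (1 - sqrt (1 - 2 * \<epsilon>), 1 - sqrt (1 - 2 * \<epsilon>)) > \<delta>})
            \<longlonglongrightarrow> 0"
proof -
  define d where "d = min (\<delta>/4) (sst / 2)"
  have d0: "0 < d" using de sst_pos by (simp add: d_def)
  define s1 where "s1 = sst - d"
  define s2 where "s2 = sst + d"
  have s1p: "0 < s1" using sst_pos by (simp add: s1_def d_def)
  have s2p: "0 < s2" using sst_pos d0 by (simp add: s2_def)
  define \<eta> where "\<eta> = \<delta> / 4"
  have eta0: "0 < \<eta>" using de by (simp add: \<eta>_def)
  define rs where "rs = 1 - sqrt (1 - 2 * \<epsilon>)"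
  have rs: "rs = 1 - exp (- sst)" using expsst by (simp add: rs_def)
  define BA where "BA = (\<lambda>K. {xs. case ic_tau (nat \<lfloor>\<epsilon> * real K\<rfloor>) xs of None \<Rightarrow> True
               | Some t \<Rightarrow> \<bar>real t / real K - (1/2) * ln (1 / (1 - 2 * \<epsilon>))\<bar> > d})"
  define FR1 where "FR1 = (\<lambda>K. {xs. \<eta> \<le> \<bar>real (ic_R (xs ! tt s1 K)) / real K - (1 - exp (- s1))\<bar>})"
  define FR2 where "FR2 = (\<lambda>K. {xs. \<eta> \<le> \<bar>real (ic_R (xs ! tt s2 K)) / real K - (1 - exp (- s2))\<bar>})"
  define FC1 where "FC1 = (\<lambda>K. {xs. \<eta> \<le> \<bar>real (ic_C (xs ! tt s1 K)) / real K - (1 - exp (- s1))\<bar>})"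
  define FC2 where "FC2 = (\<lambda>K. {xs. \<eta> \<le> \<bar>real (ic_C (xs ! tt s2 K)) / real K - (1 - exp (- s2))\<bar>})"
  have l0: "(\<lambda>K. measure_pmf.prob (ic_full K) (BA K)) \<longlonglongrightarrow> 0" unfolding BA_def by (rule partA[OF d0])
  have l1: "(\<lambda>K. measure_pmf.prob (ic_full K) (FR1 K)) \<longlonglongrightarrow> 0" unfolding FR1_def by (rule prob_R[OF s1p eta0])
  have l2: "(\<lambda>K. measure_pmf.prob (ic_full K) (FR2 K)) \<longlonglongrightarrow> 0" unfolding FR2_def by (rule prob_R[OF s2p eta0])
  have l3: "(\<lambda>K. measure_pmf.prob (ic_full K) (FC1 K)) \<longlonglongrightarrow> 0" unfolding FC1_def by (rule prob_C[OF s1p eta0])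
  have l4: "(\<lambda>K. measure_pmf.prob (ic_full K) (FC2 K)) \<longlonglongrightarrow> 0" unfolding FC2_def by (rule prob_C[OF s2p eta0])
  have e1: "exp (- s1) - exp (- sst) \<le> d"
    using exp_diff_le[of s1 d] s1p d0 by (simp add: s1_def)
  have e2: "exp (- sst) - exp (- s2) \<le> d"
    using exp_diff_le[of sst d] sst_pos d0 by (simp add: s2_def)
  have dd: "d + \<eta> \<le> \<delta> / 2" by (simp add: d_def \<eta>_def)
  show ?thesis
  proof (rule tend0_bound)
    show "(\<lambda>K. measure_pmf.prob (ic_full K) (BA K) + measure_pmf.prob (ic_full K) (FR1 K) + measure_pmf.prob (ic_full K) (FR2 K)
          + measure_pmf.prob (ic_full K) (FC1 K) + measure_pmf.prob (ic_full K) (FC2 K)) \<longlonglongrightarrow> 0"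
      using tendsto_add[OF tendsto_add[OF tendsto_add[OF tendsto_add[OF l0 l1] l2] l3] l4] by simp
    show "eventually (\<lambda>K. measure_pmf.prob (ic_full K)
            {xs. case ic_tau (nat \<lfloor>\<epsilon> * real K\<rfloor>) xs of
                   None \<Rightarrow> True
                 | Some t \<Rightarrow> dist (real (ic_R (xs ! t)) / real K, real (ic_C (xs ! t)) / real K)
                                  (1 - sqrt (1 - 2 * \<epsilon>), 1 - sqrt (1 - 2 * \<epsilon>)) > \<delta>}
       \<le> measure_pmf.prob (ic_full K) (BA K) + measure_pmf.prob (ic_full K) (FR1 K) + measure_pmf.prob (ic_full K) (FR2 K)
          + measure_pmf.prob (ic_full K) (FC1 K) + measure_pmf.prob (ic_full K) (FC2 K)) sequentially"
      using ev_tt[OF s1p] ev_tt[OF s2p]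
    proof eventually_elim
      case (elim K)
      define t1 where "t1 = tt s1 K"
      define t2 where "t2 = tt s2 K"
      have K1: "1 \<le> K" and t2N: "t2 \<le> K^2" using elim by (auto simp: t2_def)
      have Kp: "0 < real K" using K1 by simp
      have "measure_pmf.prob (ic_full K)
            {xs. case ic_tau (nat \<lfloor>\<epsilon> * real K\<rfloor>) xs of
                   None \<Rightarrow> True
                 | Some t \<Rightarrow> dist (real (ic_R (xs ! t)) / real K, real (ic_C (xs ! t)) / real K)
                                  (1 - sqrt (1 - 2 * \<epsilon>), 1 - sqrt (1 - 2 * \<epsilon>)) > \<delta>}
          \<le> measure_pmf.prob (ic_full K) (BA K \<union> FR1 K \<union> FR2 K \<union> FC1 K \<union> FC2 K)"
      proof (rule prob_supp_sub)
        fix xs assume xs: "xs \<in> set_pmf (ic_full K)"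
          and bad: "xs \<in> {xs. case ic_tau (nat \<lfloor>\<epsilon> * real K\<rfloor>) xs of
                   None \<Rightarrow> True
                 | Some t \<Rightarrow> dist (real (ic_R (xs ! t)) / real K, real (ic_C (xs ! t)) / real K)
                                  (1 - sqrt (1 - 2 * \<epsilon>), 1 - sqrt (1 - 2 * \<epsilon>)) > \<delta>}"
        show "xs \<in> BA K \<union> FR1 K \<union> FR2 K \<union> FC1 K \<union> FC2 K"
        proof (rule ccontr)
          assume "xs \<notin> BA K \<union> FR1 K \<union> FR2 K \<union> FC1 K \<union> FC2 K"
          then have nA: "xs \<notin> BA K"
            and r1: "\<bar>real (ic_R (xs ! t1)) / real K - (1 - exp (- s1))\<bar> < \<eta>"
            and r2: "\<bar>real (ic_R (xs ! t2)) / real K - (1 - exp (- s2))\<bar> < \<eta>"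
            and c1: "\<bar>real (ic_C (xs ! t1)) / real K - (1 - exp (- s1))\<bar> < \<eta>"
            and c2: "\<bar>real (ic_C (xs ! t2)) / real K - (1 - exp (- s2))\<bar> < \<eta>"
            by (auto simp: FR1_def FR2_def FC1_def FC2_def t1_def t2_def)
          obtain t where tS: "ic_tau (nat \<lfloor>\<epsilon> * real K\<rfloor>) xs = Some t"
            and tw: "\<bar>real t / real K - sst\<bar> \<le> d"
            using nA by (cases "ic_tau (nat \<lfloor>\<epsilon> * real K\<rfloor>) xs") (auto simp: BA_def sst_def)
          have g: "good K (K^2) xs" by (rule full_good[OF K1 xs])
          have "s1 \<le> real t / real K" using tw by (simp add: s1_def abs_le_iff)
          then have "s1 * real K \<le> real t" using Kp by (simp add: field_simps)
          then have "real t1 \<le> real t" using tt_bounds(2)[OF s1p, of K] by (simp add: t1_def)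
          then have tt1: "t1 \<le> t" by simp
          have "real t / real K \<le> s2" using tw by (simp add: s2_def abs_le_iff)
          then have "real t \<le> s2 * real K" using Kp by (simp add: field_simps)
          then have tt2: "t \<le> t2" unfolding t2_def tt_def by (rule nat_le_floor)
          have tN: "t \<le> K^2" using tt2 t2N by simp
          have R12: "ic_R (xs ! t1) \<le> ic_R (xs ! t)" "ic_R (xs ! t) \<le> ic_R (xs ! t2)"
            using monoR[OF g tt1 tN] monoR[OF g tt2 t2N] by auto
          have C12: "ic_C (xs ! t1) \<le> ic_C (xs ! t)" "ic_C (xs ! t) \<le> ic_C (xs ! t2)"
            using monoC[OF g tt1 tN] monoC[OF g tt2 t2N] by auto
          have Rb: "\<bar>real (ic_R (xs ! t)) / real K - rs\<bar> < \<delta> / 2"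
          proof -
            have "real (ic_R (xs ! t1)) / real K \<le> real (ic_R (xs ! t)) / real K"
              using R12 Kp by (simp add: divide_right_mono)
            moreover have "real (ic_R (xs ! t)) / real K \<le> real (ic_R (xs ! t2)) / real K"
              using R12 Kp by (simp add: divide_right_mono)
            moreover have "1 - exp (- s1) - \<eta> < real (ic_R (xs ! t1)) / real K" using r1 by (auto simp: abs_less_iff)
            moreover have "real (ic_R (xs ! t2)) / real K < 1 - exp (- s2) + \<eta>" using r2 by (auto simp: abs_less_iff)
            ultimately show ?thesis unfolding abs_less_iff by (intro conjI) (use e1 e2 dd rs in linarith)+
          qed
          have Cb: "\<bar>real (ic_C (xs ! t)) / real K - rs\<bar> < \<delta> / 2"
          proof -
            have "real (ic_C (xs ! t1)) / real K \<le> real (ic_C (xs ! t)) / real K"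
              using C12 Kp by (simp add: divide_right_mono)
            moreover have "real (ic_C (xs ! t)) / real K \<le> real (ic_C (xs ! t2)) / real K"
              using C12 Kp by (simp add: divide_right_mono)
            moreover have "1 - exp (- s1) - \<eta> < real (ic_C (xs ! t1)) / real K" using c1 by (auto simp: abs_less_iff)
            moreover have "real (ic_C (xs ! t2)) / real K < 1 - exp (- s2) + \<eta>" using c2 by (auto simp: abs_less_iff)
            ultimately show ?thesis unfolding abs_less_iff by (intro conjI) (use e1 e2 dd rs in linarith)+
          qed
          have "dist (real (ic_R (xs ! t)) / real K, real (ic_C (xs ! t)) / real K) (rs, rs)
              \<le> \<bar>real (ic_R (xs ! t)) / real K - rs\<bar> + \<bar>real (ic_C (xs ! t)) / real K - rs\<bar>"
            unfolding dist_Pair_Pair dist_real_def power2_abs by (rule sqrt_sum_squares_le_sum_abs)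
          then have "dist (real (ic_R (xs ! t)) / real K, real (ic_C (xs ! t)) / real K) (rs, rs) < \<delta>"
            using Rb Cb by linarith
          then show False using bad tS by (simp add: rs_def)
        qed
      qed
      also have "\<dots> \<le> measure_pmf.prob (ic_full K) (BA K) + measure_pmf.prob (ic_full K) (FR1 K) + measure_pmf.prob (ic_full K) (FR2 K)
          + measure_pmf.prob (ic_full K) (FC1 K) + measure_pmf.prob (ic_full K) (FC2 K)"
        by (rule prob_union5)
      finally show ?case .
    qed
  qed simp
qed

end

theorem proposition6p2:
  fixes \<epsilon> :: real
  assumes "0 < \<epsilon>" and "\<epsilon> < 1/2"
  shows "(\<forall>\<delta>>0. (\<lambda>K. measure_pmf.prob (ic_full K)
            {xs. case ic_tau (nat \<lfloor>\<epsilon> * real K\<rfloor>) xs of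
                   None \<Rightarrow> True
                 | Some t \<Rightarrow> \<bar>real t / real K - (1/2) * ln (1 / (1 - 2 * \<epsilon>))\<bar> > \<delta>})
            \<longlonglongrightarrow> 0) \<and>
         (\<forall>\<delta>>0. (\<lambda>K. measure_pmf.prob (ic_full K)
            {xs. case ic_tau (nat \<lfloor>\<epsilon> * real K\<rfloor>) xs of
                   None \<Rightarrow> True
                 | Some t \<Rightarrow> dist (real (ic_R (xs ! t)) / real K, real (ic_C (xs ! t)) / real K)
                                  (1 - sqrt (1 - 2 * \<epsilon>), 1 - sqrt (1 - 2 * \<epsilon>)) > \<delta>})
            \<longlonglongrightarrow> 0)"
  using partA[OF assms] partB[OF assms] by blast

end
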